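(* Let $\gamma_1,\gamma_2>0$ and consider the birth-death chain RDS $(\theta,\varphi)$ described in the context. For $i\in\{0,1\}$ let $a_i(q):=\lim_{n\to\infty}\varphi^{2n}_{\theta^{-2n}q}(i)$ (which exists $\mathbb{P}$-a.s.). The weak attractor of this RDS is $A_q=\{a_0(q),a_1(q)\}$, and it (i) is a random periodic orbit of period $2$, i.e. $\varphi^1_q(a_0(q))=a_1(\theta q)$ and $\varphi^1_q(a_1(q))=a_0(\theta q)$ for $\mathbb{P}$-a.e. $q$; (ii) is a (strong) pullback attractor and a (strong) forward attractor; (iii) satisfies $|a_0(q)-a_1(q)|=1$ for $\mathbb{P}$-a.e. $q$.
   Context: Noise space $\mathcal{Q}=\{q=(q_n)_{n\in\mathbb{Z}}: q_n\in[0,1]\}$ with product Borel $\sigma$-algebra and $\mathbb{P}=\lambda^{\mathbb{Z}}$ ($\lambda$ Lebesgue on $[0,1]$), invertible shift $(\theta q)_n=q_{n+1}$. For $q\in\mathcal{Q}$, $f_q(x)=x+1$ if $q_0<\frac{\gamma_1}{\gamma_1+\gamma_2x}$ and $f_q(x)=x-1$ otherwise; $\varphi^0_q=\mathrm{id}$, $\varphi^n_q=f_{\theta^{n-1}q}\circ\cdots\circ f_q$. With $d(x,B)=\inf_{y\in B}|x-y|$ and $\mathrm{dist}(A,B)=\sup_{x\in A}d(x,B)$: a weak attractor is a map $A:\mathcal{Q}\to\mathcal{P}(\mathbb{N}_0)$ with $q\mapsto d(x,A_q)$ measurable, $A_q$ nonempty finite, $\varphi^n_q(A_q)=A_{\theta^nq}$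 for all $n$ $\mathbb{P}$-a.s., and $\mathrm{dist}(\varphi^n_q(B),A_{\theta^nq})\to0$ in probability for every finite $B$ (it is unique up to $\mathbb{P}$-a.s. equality). Such an invariant $A$ is a pullback attractor if $\lim_n\mathrm{dist}(\varphi^n_{\theta^{-n}q}(B),A_q)=0$ $\mathbb{P}$-a.s. for every finite $B$, and a forward attractor if $\lim_n\mathrm{dist}(\varphi^n_q(B),A_{\theta^nq})=0$ $\mathbb{P}$-a.s. for every finite $B$. *)

theory Defs
  imports "HOL-Probability.Probability"
begin

type_synonym noise = "int \<Rightarrow> real"

definition Pn :: "noise measure" where
  "Pn = PiM UNIV (\<lambda>_::int. restrict_space lborel {0..1::real})"

text \<open>Shift by an integer: shift k q = theta^k q, (theta q)_n = q_(n+1).\<close>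
definition shift :: "int \<Rightarrow> noise \<Rightarrow> noise" where
  "shift k q = (\<lambda>m. q (m + k))"

definition fstep :: "real \<Rightarrow> real \<Rightarrow> noise \<Rightarrow> nat \<Rightarrow> nat" where
  "fstep g1 g2 q x = (if q 0 < g1 / (g1 + g2 * real x) then x + 1 else x - 1)"

primrec phi :: "real \<Rightarrow> real \<Rightarrow> nat \<Rightarrow> noise \<Rightarrow> nat \<Rightarrow> nat" where
  "phi g1 g2 0 q = id"
| "phi g1 g2 (Suc n) q = fstep g1 g2 (shift (int n) q) \<circ> phi g1 g2 n q"

definition pdist :: "nat \<Rightarrow> nat set \<Rightarrow> real" where
  "pdist x B = (INF y\<in>B. \<bar>real x - real y\<bar>)"

definition hdist :: "nat set \<Rightarrow> nat set \<Rightarrow> real" where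
  "hdist A B = (if A = {} then 0 else (SUP x\<in>A. pdist x B))"

definition random_finite_set :: "(noise \<Rightarrow> nat set) \<Rightarrow> bool" where
  "random_finite_set A \<longleftrightarrow>
     (\<forall>x::nat. (\<lambda>q. pdist x (A q)) \<in> borel_measurable Pn) \<and>
     (\<forall>q\<in>space Pn. A q \<noteq> {} \<and> finite (A q))"

definition invariant :: "real \<Rightarrow> real \<Rightarrow> (noise \<Rightarrow> nat set) \<Rightarrow> bool" where
  "invariant g1 g2 A \<longleftrightarrow>
     (AE q in Pn. \<forall>n. phi g1 g2 n q ` A q = A (shift (int n) q))"

definition weak_attractor :: "real \<Rightarrow> real \<Rightarrow> (noise \<Rightarrow> nat set) \<Rightarrow> bool" where
  "weak_attractor g1 g2 A \<longleftrightarrow> random_finite_set A \<and> invariant g1 g2 A \<and>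
     (\<forall>B::nat set. finite B \<longrightarrow>
        (\<forall>n. (\<lambda>q. hdist (phi g1 g2 n q ` B) (A (shift (int n) q))) \<in> borel_measurable Pn) \<and>
        (\<forall>e>0. (\<lambda>n. measure Pn {q\<in>space Pn. hdist (phi g1 g2 n q ` B) (A (shift (int n) q)) > e})
                 \<longlonglongrightarrow> 0))"

definition pullback_attractor :: "real \<Rightarrow> real \<Rightarrow> (noise \<Rightarrow> nat set) \<Rightarrow> bool" where
  "pullback_attractor g1 g2 A \<longleftrightarrow> random_finite_set A \<and> invariant g1 g2 A \<and>
     (\<forall>B::nat set. finite B \<longrightarrow>
        (AE q in Pn. (\<lambda>n. hdist (phi g1 g2 n (shift (- int n) q) ` B) (A q)) \<longlonglongrightarrow> 0))"

definition forward_attractor :: "real \<Rightarrow> real \<Rightarrow> (noise \<Rightarrow> nat set) \<Rightarrow> bool" where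
  "forward_attractor g1 g2 A \<longleftrightarrow> random_finite_set A \<and> invariant g1 g2 A \<and>
     (\<forall>B::nat set. finite B \<longrightarrow>
        (AE q in Pn. (\<lambda>n. hdist (phi g1 g2 n q ` B) (A (shift (int n) q))) \<longlonglongrightarrow> 0))"

definition aseq :: "real \<Rightarrow> real \<Rightarrow> nat \<Rightarrow> noise \<Rightarrow> nat \<Rightarrow> nat" where
  "aseq g1 g2 i q n = phi g1 g2 (2 * n) (shift (- (2 * int n)) q) i"

definition alim :: "real \<Rightarrow> real \<Rightarrow> nat \<Rightarrow> noise \<Rightarrow> nat" where
  "alim g1 g2 i q = lim (aseq g1 g2 i q)"

end

theory Submission
  imports Defs
begin

lemma shift_shift: "shift a (shift b q) = shift (a + b) q"
  unfolding shift_def by (simp add: add.commute add.left_commute)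

lemma shift_0[simp]: "shift 0 q = q"
  unfolding shift_def by simp

lemma shift_apply: "shift a q k = q (k + a)"
  unfolding shift_def by simp

lemma phi_Suc': "phi g1 g2 (Suc n) q x = fstep g1 g2 (shift (int n) q) (phi g1 g2 n q x)"
  by simp

lemma phi_add: "phi g1 g2 (m + n) q x = phi g1 g2 n (shift (int m) q) (phi g1 g2 m q x)"
proof (induction n)
  case 0
  then show ?case by simp
next
  case (Suc n)
  have "phi g1 g2 (m + Suc n) q x = fstep g1 g2 (shift (int (m + n)) q) (phi g1 g2 (m + n) q x)"
    by simp
  also have "\<dots> = fstep g1 g2 (shift (int n) (shift (int m) q)) (phi g1 g2 n (shift (int m) q) (phi g1 g2 m q x))"
    using Suc by (simp add: shift_shift add.commute)
  finally show ?case by simp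
qed

definition pth :: "real \<Rightarrow> real \<Rightarrow> nat \<Rightarrow> real" where
  "pth g1 g2 x = g1 / (g1 + g2 * real x)"

lemma fstep_eq: "fstep g1 g2 q x = (if q 0 < pth g1 g2 x then x + 1 else x - 1)"
  unfolding fstep_def pth_def by simp

lemma pth_mono:
  assumes "g1 > 0" "g2 > 0" "x \<le> y"
  shows "pth g1 g2 y \<le> pth g1 g2 x"
  unfolding pth_def using assms
  by (intro divide_left_mono) (auto intro!: mult_left_mono mult_pos_pos add_pos_nonneg)

lemma pth_0: "g1 > 0 \<Longrightarrow> pth g1 g2 0 = 1"
  unfolding pth_def by simp

lemma fstep_le: "fstep g1 g2 q x \<le> x + 1"
  unfolding fstep_def by auto

lemma fstep_ge: "fstep g1 g2 q x \<ge> x - 1"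
  unfolding fstep_def by auto

lemma fstep_par:
  assumes "g1 > 0" "q 0 < 1"
  shows "even (fstep g1 g2 q x) \<longleftrightarrow> odd x"
proof (cases "x = 0")
  case True
  then show ?thesis using assms pth_0[of g1 g2] by (simp add: fstep_eq)
next
  case False
  then show ?thesis by (auto simp: fstep_eq)
qed

lemma phi_par:
  assumes "g1 > 0" "\<forall>k. q k < 1"
  shows "even (phi g1 g2 n q x) \<longleftrightarrow> even (x + n)"
proof (induction n)
  case 0
  then show ?case by simp
next
  case (Suc n)
  have "shift (int n) q 0 < 1" using assms by (simp add: shift_apply)
  then show ?case using Suc fstep_par[OF assms(1)] by simp
qed

lemma fstep_mono:
  assumes "g1 > 0" "q 0 < 1" "x \<le> y" "even x = even y"
  shows "fstep g1 g2 q x \<le> fstep g1 g2 q y"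
proof (cases "x = y")
  case False
  then have "x + 2 \<le> y" using assms(3,4)
    by (metis add_2_eq_Suc' dvd_add_triv_right_iff even_Suc le_antisym not_less_eq_eq odd_one)
  moreover have "fstep g1 g2 q x \<le> x + 1" by (rule fstep_le)
  moreover have "fstep g1 g2 q y \<ge> y - 1" by (rule fstep_ge)
  ultimately show ?thesis by linarith
qed simp

lemma phi_mono:
  assumes "g1 > 0" "\<forall>k. q k < 1" "x \<le> y" "even x = even y"
  shows "phi g1 g2 n q x \<le> phi g1 g2 n q y"
proof (induction n)
  case 0
  then show ?case using assms by simp
next
  case (Suc n)
  have "shift (int n) q 0 < 1" using assms by (simp add: shift_apply)
  moreover have "even (phi g1 g2 n q x) = even (phi g1 g2 n q y)"
    using phi_par[OF assms(1,2)] assms(4) by simp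
  ultimately show ?case using Suc fstep_mono[OF assms(1)] by simp
qed

lemma fstep_dist1:
  assumes "g1 > 0" "g2 > 0" "q 0 < 1"
  shows "fstep g1 g2 q (Suc x) = Suc (fstep g1 g2 q x) \<or> fstep g1 g2 q x = Suc (fstep g1 g2 q (Suc x))"
proof -
  have m: "pth g1 g2 (Suc x) \<le> pth g1 g2 x" using pth_mono[OF assms(1,2)] by simp
  show ?thesis
  proof (cases "q 0 < pth g1 g2 (Suc x)")
    case True
    then show ?thesis using m by (simp add: fstep_eq)
  next
    case False
    show ?thesis
    proof (cases "q 0 < pth g1 g2 x")
      case True
      then show ?thesis using False by (simp add: fstep_eq)
    next
      case F2: False
      have "x \<noteq> 0" proof assume "x = 0" then show False using F2 assms pth_0[of g1 g2] by simp qed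
      then show ?thesis using False F2 by (simp add: fstep_eq)
    qed
  qed
qed

lemma phi_dist1:
  assumes "g1 > 0" "g2 > 0" "\<forall>k. q k < 1"
  shows "\<bar>int (phi g1 g2 n q x) - int (phi g1 g2 n q (Suc x))\<bar> = 1"
proof (induction n)
  case 0
  then show ?case by simp
next
  case (Suc n)
  have q0: "shift (int n) q 0 < 1" using assms by (simp add: shift_apply)
  let ?a = "phi g1 g2 n q x" and ?b = "phi g1 g2 n q (Suc x)"
  have "?b = Suc ?a \<or> ?a = Suc ?b" using Suc by linarith
  then show ?case
  proof
    assume "?b = Suc ?a"
    then show ?thesis using fstep_dist1[where x="?a" and q="shift (int n) q", OF assms(1,2) q0] by auto
  next
    assume "?a = Suc ?b"
    then show ?thesis using fstep_dist1[where x="?b" and q="shift (int n) q", OF assms(1,2) q0] by auto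
  qed
qed

definition wv :: "real \<Rightarrow> real \<Rightarrow> int" where
  "wv e r = (if r < e then 1 else -1)"

definition Wt :: "real \<Rightarrow> noise \<Rightarrow> int \<Rightarrow> int \<Rightarrow> int" where
  "Wt e q a b = (\<Sum>k\<in>{a..<b}. wv e (q k))"

definition Vf :: "nat \<Rightarrow> nat \<Rightarrow> int" where
  "Vf K x = max (int x - int K) 0"

lemma Wt_empty[simp]: "Wt e q a a = 0"
  unfolding Wt_def by simp

lemma Wt_snoc: "a \<le> b \<Longrightarrow> Wt e q a (b + 1) = Wt e q a b + wv e (q b)"
proof -
  assume "a \<le> b"
  then have "{a..<b+1} = insert b {a..<b}" by auto
  then show ?thesis unfolding Wt_def by simp
qed

lemma Wt_split: "a \<le> b \<Longrightarrow> b \<le> c \<Longrightarrow> Wt e q a c = Wt e q a b + Wt e q b c"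
proof -
  assume "a \<le> b" "b \<le> c"
  then have "{a..<c} = {a..<b} \<union> {b..<c}" by auto
  then show ?thesis unfolding Wt_def by (simp add: sum.union_disjoint)
qed

lemma Wt_shift: "Wt e (shift s q) a b = Wt e q (a + s) (b + s)"
  unfolding Wt_def shift_def
  by (rule sum.reindex_bij_witness[where i="\<lambda>k. k - s" and j="\<lambda>k. k + s"]) auto

lemma Wt_D:
  assumes "a \<le> b" "\<forall>k. a \<le> k \<and> k < b \<longrightarrow> e \<le> q k"
  shows "Wt e q a b = -(b - a)"
proof -
  have "Wt e q a b = (\<Sum>k\<in>{a..<b}. -1)"
    unfolding Wt_def wv_def using assms(2) by (intro sum.cong) auto
  then show ?thesis using assms(1) by simp
qed

lemma Wt_le: "a \<le> b \<Longrightarrow> Wt e q a b \<le> b - a"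
proof -
  assume "a \<le> b"
  have "Wt e q a b \<le> (\<Sum>k\<in>{a..<b}. 1)"
    unfolding Wt_def wv_def by (intro sum_mono) auto
  then show ?thesis using \<open>a \<le> b\<close> by simp
qed

lemma Vf_step:
  assumes "g1 > 0" "g2 > 0" "K \<ge> 1" "e = pth g1 g2 K"
  shows "Vf K (fstep g1 g2 q x) \<le> max (Vf K x + wv e (q 0)) 0"
proof (cases "q 0 < e")
  case True
  then show ?thesis using fstep_le[of g1 g2 q x] by (simp add: Vf_def wv_def)
next
  case False
  show ?thesis
  proof (cases "K \<le> x")
    case True
    have "pth g1 g2 x \<le> e" using pth_mono[OF assms(1,2) True] assms(4) by simp
    then have "fstep g1 g2 q x = x - 1" using False by (simp add: fstep_eq)
    then show ?thesis using False True assms(3) by (simp add: Vf_def wv_def)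
  next
    case F2: False
    then show ?thesis using fstep_le[of g1 g2 q x] False by (simp add: Vf_def wv_def)
  qed
qed

lemma lindley:
  assumes "g1 > 0" "g2 > 0" "K \<ge> 1" "e = pth g1 g2 K"
  shows "Vf K (phi g1 g2 n q x) \<le> Vf K x + Wt e q 0 (int n) \<or>
         (\<exists>u. 0 \<le> u \<and> u \<le> int n \<and> Vf K (phi g1 g2 n q x) \<le> Wt e q u (int n))"
proof (induction n)
  case 0
  then show ?case by simp
next
  case (Suc n)
  have st: "Vf K (phi g1 g2 (Suc n) q x) \<le> max (Vf K (phi g1 g2 n q x) + wv e (q (int n))) 0"
    using Vf_step[OF assms, of "shift (int n) q" "phi g1 g2 n q x"] by (simp add: shift_apply)
  have ws: "\<And>u. u \<le> int n \<Longrightarrow> Wt e q u (int (Suc n)) = Wt e q u (int n) + wv e (q (int n))"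
    using Wt_snoc[of _ "int n" e q] by (simp add: add.commute)
  show ?case
  proof (cases "Vf K (phi g1 g2 (Suc n) q x) \<le> 0")
    case True
    then show ?thesis by (intro disjI2 exI[of _ "int (Suc n)"]) simp
  next
    case False
    then have st': "Vf K (phi g1 g2 (Suc n) q x) \<le> Vf K (phi g1 g2 n q x) + wv e (q (int n))"
      using st by linarith
    from Suc show ?thesis
    proof
      assume "Vf K (phi g1 g2 n q x) \<le> Vf K x + Wt e q 0 (int n)"
      then show ?thesis using st' ws[of 0] by (intro disjI1) linarith
    next
      assume "\<exists>u\<ge>0. u \<le> int n \<and> Vf K (phi g1 g2 n q x) \<le> Wt e q u (int n)"
      then obtain u where "0 \<le> u" "u \<le> int n" "Vf K (phi g1 g2 n q x) \<le> Wt e q u (int n)" by blast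
      then show ?thesis using st' ws[of u] by (intro disjI2 exI[of _ u]) auto
    qed
  qed
qed

lemma lindley_bound:
  assumes "g1 > 0" "g2 > 0" "K \<ge> 1"
    and "\<forall>u. 0 \<le> u \<and> u \<le> int n \<longrightarrow> Wt (pth g1 g2 K) q u (int n) \<le> 0"
    and "Vf K x + Wt (pth g1 g2 K) q 0 (int n) \<le> 0"
  shows "phi g1 g2 n q x \<le> K"
proof -
  have "Vf K (phi g1 g2 n q x) \<le> 0"
    using lindley[OF assms(1-3) refl, of n q x] assms(4,5) by force
  then show ?thesis unfolding Vf_def by simp
qed

lemma collapse:
  assumes "g1 > 0" "g2 > 0" "\<forall>k. 0 \<le> k \<and> k < int L \<longrightarrow> pth g1 g2 1 \<le> q k \<and> q k < 1"
  shows "n \<le> L \<Longrightarrow> phi g1 g2 n q y = (if n \<le> y then y - n else (n - y) mod 2)"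
proof (induction n)
  case 0
  then show ?case by simp
next
  case (Suc n)
  then have IH: "phi g1 g2 n q y = (if n \<le> y then y - n else (n - y) mod 2)" by simp
  have qn: "pth g1 g2 1 \<le> q (int n)" "q (int n) < 1" using assms(3) Suc.prems by auto
  let ?v = "phi g1 g2 n q y"
  have down: "fstep g1 g2 (shift (int n) q) v = v - 1" if "v \<ge> 1" for v
  proof -
    have "pth g1 g2 v \<le> pth g1 g2 1" using pth_mono[OF assms(1,2) that] .
    then show ?thesis using qn by (simp add: fstep_eq shift_apply)
  qed
  have up: "fstep g1 g2 (shift (int n) q) 0 = 1"
    using qn pth_0[OF assms(1), of g2] by (simp add: fstep_eq shift_apply)
  show ?case
  proof (cases "?v = 0")
    case True
    have "phi g1 g2 (Suc n) q y = 1" using True up by simp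
    moreover have "\<not> Suc n \<le> y" using True IH by (auto split: if_splits)
    moreover have "(Suc n - y) mod 2 = 1"
    proof (cases "n \<le> y")
      case True
      then have "y = n" using \<open>?v = 0\<close> IH by simp
      then show ?thesis by simp
    next
      case False
      then have "(n - y) mod 2 = 0" using \<open>?v = 0\<close> IH by simp
      moreover have "Suc n - y = Suc (n - y)" using False by simp
      ultimately show ?thesis by presburger
    qed
    ultimately show ?thesis by simp
  next
    case False
    have e: "phi g1 g2 (Suc n) q y = ?v - 1" using False down[of ?v] by simp
    show ?thesis
    proof (cases "n \<le> y")
      case True
      then have "?v = y - n" using IH by simp
      then have "Suc n \<le> y" using False by simp
      then show ?thesis using e \<open>?v = y - n\<close> by simp
    next
      case F2: False
      then have "?v = (n - y) mod 2" using IH by simp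
      then have "(n - y) mod 2 = 1" using False by presburger
      moreover have "Suc n - y = Suc (n - y)" using F2 by simp
      ultimately show ?thesis using e F2 \<open>?v = (n - y) mod 2\<close> by simp presburger
    qed
  qed
qed

definition PBg :: "real \<Rightarrow> real \<Rightarrow> nat \<Rightarrow> noise \<Rightarrow> bool" where
  "PBg g1 g2 K q \<longleftrightarrow> (\<exists>r::int. r + int K + 1 \<le> 0 \<and>
      (\<forall>k. r \<le> k \<and> k < r + int K + 1 \<longrightarrow> pth g1 g2 1 \<le> q k) \<and>
      (\<forall>u\<le>r. Wt (pth g1 g2 K) q u r \<le> 0) \<and>
      (\<forall>d. \<exists>s0. \<forall>s\<le>s0. Wt (pth g1 g2 K) q s r \<le> - d))"

definition FWg :: "real \<Rightarrow> real \<Rightarrow> nat \<Rightarrow> nat \<Rightarrow> noise \<Rightarrow> bool" where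
  "FWg g1 g2 K M q \<longleftrightarrow> (\<exists>r::nat.
      (\<forall>k. int r \<le> k \<and> k < int r + int K + 1 \<longrightarrow> pth g1 g2 1 \<le> q k) \<and>
      (\<forall>u. 0 \<le> u \<and> u \<le> int r \<longrightarrow> Wt (pth g1 g2 K) q u (int r) \<le> 0) \<and>
      int M + Wt (pth g1 g2 K) q 0 (int r) \<le> 0)"

lemma step_collapse:
  assumes g: "g1 > 0" "g2 > 0" "K \<ge> 1" and q1: "\<forall>k. q k < 1"
    and blk: "\<forall>k. r \<le> k \<and> k < r + int K + 1 \<longrightarrow> pth g1 g2 1 \<le> q k"
    and z: "z \<le> K"
  shows "phi g1 g2 (K + 1) (shift r q) z = (if even z then (if even K then 1 else 0) else (if even K then 0 else 1))"
proof -
  have "\<forall>k. 0 \<le> k \<and> k < int (K + 1) \<longrightarrow> pth g1 g2 1 \<le> shift r q k \<and> shift r q k < 1"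
    using blk q1 by (auto simp: shift_apply)
  from collapse[OF g(1,2) this, of "K+1" z] z
  have "phi g1 g2 (K + 1) (shift r q) z = (K + 1 - z) mod 2" by simp
  also have "\<dots> = (if even z then (if even K then 1 else 0) else (if even K then 0 else 1))"
    using z by presburger
  finally show ?thesis .
qed

lemma PB_stab:
  assumes g: "g1 > 0" "g2 > 0" "K \<ge> 1" and q1: "\<forall>k. q k < 1" and pb: "PBg g1 g2 K q"
  shows "\<exists>a0 a1. \<forall>y. \<exists>S. \<forall>s\<ge>S. phi g1 g2 s (shift (- int s) q) y = (if even (y + s) then a0 else a1)"
proof -
  let ?e = "pth g1 g2 K"
  obtain r where r: "r + int K + 1 \<le> 0"
    and blk: "\<forall>k. r \<le> k \<and> k < r + int K + 1 \<longrightarrow> pth g1 g2 1 \<le> q k"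
    and lad: "\<forall>u\<le>r. Wt ?e q u r \<le> 0"
    and dr: "\<forall>d. \<exists>s0. \<forall>s\<le>s0. Wt ?e q s r \<le> - d"
    using pb unfolding PBg_def by blast
  define r1 where "r1 = r + int K + 1"
  define N1 where "N1 = nat (- r1)"
  define F where "F = (\<lambda>z::nat. phi g1 g2 N1 (shift r1 q) z)"
  define b where "b = (\<lambda>y s::nat. (if even (K + y + s) = even r then 1 else 0::nat))"
  have main: "phi g1 g2 s (shift (- int s) q) y = F (b y s)"
    if s1: "- int s \<le> s0" and s2: "- int s \<le> r" and s0: "\<forall>s\<le>s0. Wt ?e q s r \<le> - int y" for y s s0
  proof -
    define m where "m = nat (r + int s)"
    have m: "int m = r + int s" using s2 unfolding m_def by simp
    have sdec: "s = m + (K + 1) + N1" using m r unfolding N1_def r1_def by simp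
    let ?q' = "shift (- int s) q"
    define z where "z = phi g1 g2 m ?q' y"
    have "phi g1 g2 s ?q' y = phi g1 g2 N1 (shift (int (m + (K+1))) ?q') (phi g1 g2 (K+1) (shift (int m) ?q') z)"
      unfolding sdec z_def phi_add[of g1 g2 "m + (K+1)" N1] phi_add[of g1 g2 m "K+1"] ..
    also have "shift (int (m + (K+1))) ?q' = shift r1 q"
      using m unfolding r1_def by (simp add: shift_shift algebra_simps)
    also have "shift (int m) ?q' = shift r q"
      using m by (simp add: shift_shift)
    finally have e1: "phi g1 g2 s ?q' y = F (phi g1 g2 (K+1) (shift r q) z)"
      unfolding F_def .
    have zK: "z \<le> K" unfolding z_def
    proof (rule lindley_bound[OF g])
      show "\<forall>u. 0 \<le> u \<and> u \<le> int m \<longrightarrow> Wt ?e ?q' u (int m) \<le> 0"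
        using lad m by (auto simp: Wt_shift)
      have "Wt ?e ?q' 0 (int m) = Wt ?e q (- int s) r" using m by (simp add: Wt_shift)
      moreover have "Wt ?e q (- int s) r \<le> - int y" using s0 s1 by blast
      moreover have "Vf K y \<le> int y" unfolding Vf_def by simp
      ultimately show "Vf K y + Wt ?e ?q' 0 (int m) \<le> 0" by linarith
    qed
    have zpar: "even z \<longleftrightarrow> even (y + m)"
      unfolding z_def using phi_par[OF g(1), of ?q'] q1 by (simp add: shift_apply)
    have "phi g1 g2 (K+1) (shift r q) z = b y s"
      unfolding step_collapse[OF g q1 blk zK] b_def zpar
      using m by (auto simp: even_add) presburger+
    then show ?thesis using e1 by simp
  qed
  show ?thesis
  proof (rule exI[of _ "F (if even K = even r then 1 else 0)"], rule exI[of _ "F (if even K = even r then 0 else 1)"], rule allI)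
    fix y
    obtain s0 where s0: "\<forall>s\<le>s0. Wt ?e q s r \<le> - int y" using dr by blast
    have "\<forall>s\<ge>nat (max (- s0) (- r)). phi g1 g2 s (shift (- int s) q) y =
        (if even (y + s) then F (if even K = even r then 1 else 0) else F (if even K = even r then 0 else 1))"
    proof (intro allI impI)
      fix s assume "nat (max (- s0) (- r)) \<le> s"
      then have "- int s \<le> s0" "- int s \<le> r" by auto
      then have "phi g1 g2 s (shift (- int s) q) y = F (b y s)" using main s0 by blast
      then show "phi g1 g2 s (shift (- int s) q) y =
        (if even (y + s) then F (if even K = even r then 1 else 0) else F (if even K = even r then 0 else 1))"
        unfolding b_def by (auto simp: even_add)
    qed
    then show "\<exists>S. \<forall>s\<ge>S. phi g1 g2 s (shift (- int s) q) y =
        (if even (y + s) then F (if even K = even r then 1 else 0) else F (if even K = even r then 0 else 1))"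
      by blast
  qed
qed

lemma FW_coal:
  assumes g: "g1 > 0" "g2 > 0" "K \<ge> 1" and q1: "\<forall>k. q k < 1" and fw: "FWg g1 g2 K M q"
  shows "\<exists>N. \<forall>x x' n. x \<le> K + M \<longrightarrow> x' \<le> K + M \<longrightarrow> even x = even x' \<longrightarrow> N \<le> n \<longrightarrow>
           phi g1 g2 n q x = phi g1 g2 n q x'"
proof -
  let ?e = "pth g1 g2 K"
  obtain r where blk: "\<forall>k. int r \<le> k \<and> k < int r + int K + 1 \<longrightarrow> pth g1 g2 1 \<le> q k"
    and lad: "\<forall>u. 0 \<le> u \<and> u \<le> int r \<longrightarrow> Wt ?e q u (int r) \<le> 0"
    and mm: "int M + Wt ?e q 0 (int r) \<le> 0"
    using fw unfolding FWg_def by blast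
  have val: "phi g1 g2 (r + (K + 1)) q x =
      (if even (x + r) then (if even K then 1 else 0) else (if even K then 0 else 1))"
    if x: "x \<le> K + M" for x
  proof -
    define z where "z = phi g1 g2 r q x"
    have zK: "z \<le> K" unfolding z_def
    proof (rule lindley_bound[OF g lad])
      have "Vf K x \<le> int M" using x unfolding Vf_def by simp
      then show "Vf K x + Wt ?e q 0 (int r) \<le> 0" using mm by linarith
    qed
    have zpar: "even z \<longleftrightarrow> even (x + r)"
      unfolding z_def using phi_par[OF g(1) q1] by simp
    have "phi g1 g2 (r + (K + 1)) q x = phi g1 g2 (K+1) (shift (int r) q) z"
      unfolding z_def phi_add[of g1 g2 r "K+1"] ..
    also have "\<dots> = (if even z then (if even K then 1 else 0) else (if even K then 0 else 1))"
      using step_collapse[OF g q1 _ zK, of "int r"] blk by simp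
    finally show ?thesis using zpar by simp
  qed
  show ?thesis
  proof (intro exI allI impI)
    fix x x' n assume x: "x \<le> K + M" and x': "x' \<le> K + M" and p: "even x = even x'"
      and n: "r + (K + 1) \<le> n"
    have "phi g1 g2 (r + (K + 1)) q x = phi g1 g2 (r + (K + 1)) q x'"
      using val[OF x] val[OF x'] p by (simp add: even_add)
    moreover have "n = (r + (K + 1)) + (n - (r + (K + 1)))" using n by simp
    ultimately show "phi g1 g2 n q x = phi g1 g2 n q x'"
      by (metis phi_add)
  qed
qed

definition M0 :: "real measure" where
  "M0 = restrict_space lborel {0..1}"

lemma Pn_M0: "Pn = PiM UNIV (\<lambda>_. M0)"
  unfolding Pn_def M0_def ..

lemma space_M0: "space M0 = {0..1}"
  unfolding M0_def by simp

lemma sets_M0_iff: "A \<in> sets M0 \<longleftrightarrow> A \<in> sets borel \<and> A \<subseteq> {0..1}"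
  unfolding M0_def by (auto simp: sets_restrict_space_iff)

lemma emeasure_M0: "A \<in> sets borel \<Longrightarrow> A \<subseteq> {0..1} \<Longrightarrow> emeasure M0 A = emeasure lborel A"
  unfolding M0_def by (subst emeasure_restrict_space) auto

lemma measure_M0: "A \<in> sets borel \<Longrightarrow> A \<subseteq> {0..1} \<Longrightarrow> measure M0 A = measure lborel A"
  unfolding M0_def by (subst measure_restrict_space) auto

lemma prob_M0: "prob_space M0"
proof
  show "emeasure M0 (space M0) = 1"
    by (simp add: space_M0 emeasure_M0)
qed

interpretation PP: product_prob_space "\<lambda>_::int. M0" UNIV
  by (simp add: product_prob_space_def product_sigma_finite_def prob_M0 prob_space_imp_sigma_finite
       product_prob_space_axioms_def)

lemma prob_Pn: "prob_space Pn"
  unfolding Pn_M0 by (rule PP.P.prob_space_axioms)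

lemma space_Pn: "space Pn = {q. \<forall>k. 0 \<le> q k \<and> q k \<le> 1}"
  unfolding Pn_M0 by (auto simp: space_PiM space_M0 PiE_def Pi_def extensional_def)

lemma meas_coordM0: "(\<lambda>q. q k) \<in> measurable Pn M0"
  unfolding Pn_M0 by simp

lemma meas_coord[measurable]: "(\<lambda>q. q k) \<in> borel_measurable Pn"
proof -
  have "(\<lambda>x. x) \<in> borel_measurable M0"
    unfolding M0_def by (intro measurable_restrict_space1) simp
  then show ?thesis using meas_coordM0 by (rule measurable_compose[rotated])
qed

lemma meas_shift[measurable]: "(\<lambda>q. shift k q) \<in> measurable Pn Pn"
proof -
  have "(\<lambda>q m. q (m + k)) \<in> measurable Pn (PiM UNIV (\<lambda>_. M0))"
    by (rule measurable_PiM_single') (auto simp: meas_coordM0 space_Pn space_M0)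
  then show ?thesis unfolding shift_def Pn_M0 .
qed

lemma meas_phi[measurable]: "(\<lambda>q. phi g1 g2 n q x) \<in> measurable Pn (count_space UNIV)"
proof (induction n)
  case 0
  then show ?case by simp
next
  case (Suc n)
  have eq: "(\<lambda>q. phi g1 g2 (Suc n) q x) = (\<lambda>q. if q (int n) < g1 / (g1 + g2 * real (phi g1 g2 n q x))
      then phi g1 g2 n q x + 1 else phi g1 g2 n q x - 1)"
    by (auto simp: fstep_def shift_apply)
  define f where "f = (\<lambda>i q. if q (int n) < g1 / (g1 + g2 * real i) then i + 1 else (i::nat) - 1)"
  have fm: "(\<lambda>q. f i q) \<in> measurable Pn (count_space UNIV)" for i
    unfolding f_def by measurable
  have "(\<lambda>q. f (phi g1 g2 n q x) q) \<in> measurable Pn (count_space UNIV)"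
    by (rule measurable_compose_countable[where f=f and g="\<lambda>q. phi g1 g2 n q x", OF fm Suc])
  then have "(\<lambda>q. (if q (int n) < g1 / (g1 + g2 * real (phi g1 g2 n q x))
      then phi g1 g2 n q x + 1 else phi g1 g2 n q x - 1)) \<in> measurable Pn (count_space UNIV)"
    unfolding f_def .
  then show ?case unfolding eq by simp
qed

lemma rect:
  assumes "finite S" "\<And>k. k \<in> S \<Longrightarrow> X k \<in> sets M0"
  shows "measure Pn {q\<in>space Pn. \<forall>k\<in>S. q k \<in> X k} = (\<Prod>k\<in>S. measure M0 (X k))"
proof -
  have fm: "finite_measure M0" using prob_M0 by (simp add: prob_space_def)
  have "emeasure Pn {q\<in>space Pn. \<forall>k\<in>S. q k \<in> X k} = (\<Prod>k\<in>S. emeasure M0 (X k))"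
    unfolding Pn_M0 using assms by (intro PP.emeasure_PiM_Collect) auto
  then show ?thesis
    by (simp add: Pn_M0 PP.P.emeasure_eq_measure finite_measure.emeasure_eq_measure[OF fm]
        prod_ennreal measure_nonneg prod_nonneg)
qed

lemma distr_shift: "distr Pn Pn (shift k) = Pn"
proof -
  have "distr (PiM UNIV (\<lambda>_::int. M0)) (PiM UNIV (\<lambda>i. M0)) (\<lambda>\<omega>. \<lambda>n\<in>UNIV. \<omega> (n + k)) = PiM UNIV (\<lambda>i. M0)"
    using distr_PiM_reindex[of UNIV "\<lambda>_. M0" "\<lambda>n. n + k" UNIV] prob_M0 by (simp add: inj_on_def)
  moreover have "(\<lambda>\<omega>. \<lambda>n\<in>UNIV. \<omega> (n + k)) = shift k"
    unfolding restrict_def shift_def by simp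
  ultimately show ?thesis unfolding Pn_M0 by simp
qed

lemma AE_shift:
  assumes "AE q in Pn. P q"
  shows "AE q in Pn. P (shift k q)"
proof -
  have "AE q in distr Pn Pn (shift k). P q" by (subst distr_shift) (rule assms)
  then show ?thesis using AE_distrD[of "shift k" Pn Pn P] meas_shift by auto
qed

lemma coords_indep: "prob_space.indep_vars Pn (\<lambda>_. M0) (\<lambda>k q. q k) UNIV"
proof -
  interpret prob_space Pn by (rule prob_Pn)
  have "distr Pn (PiM UNIV (\<lambda>_. M0)) (\<lambda>x. \<lambda>i\<in>UNIV. x i) = (\<Pi>\<^sub>M i\<in>UNIV. distr Pn M0 (\<lambda>x. x i))"
  proof -
    have "distr Pn M0 (\<lambda>x. x i) = M0" for i
      unfolding Pn_M0 by (rule PP.PiM_component) simp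
    moreover have "distr Pn (PiM UNIV (\<lambda>_. M0)) (\<lambda>x. \<lambda>i\<in>UNIV. x i) = Pn"
      unfolding Pn_M0 restrict_def by (simp add: distr_id2)
    ultimately show ?thesis by (simp add: Pn_M0)
  qed
  then show ?thesis
    by (subst indep_vars_iff_distr_eq_PiM') (auto simp: meas_coordM0)
qed

definition extF :: "int set \<Rightarrow> (int \<Rightarrow> real) \<Rightarrow> noise" where
  "extF F x = (\<lambda>k. if k \<in> F then x k else 0)"

lemma meas_extF: "extF F \<in> measurable (PiM F (\<lambda>_. M0)) Pn"
proof -
  have "(\<lambda>x k. if k \<in> F then x k else 0) \<in> measurable (PiM F (\<lambda>_. M0)) (PiM UNIV (\<lambda>_. M0))"
  proof (rule measurable_PiM_single')
    fix k :: int
    show "(\<lambda>x. if k \<in> F then x k else 0) \<in> measurable (PiM F (\<lambda>_. M0)) M0"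
      by (cases "k \<in> F") (auto simp: space_M0)
    show "(\<lambda>x k. if k \<in> F then x k else 0) \<in> space (PiM F (\<lambda>_. M0)) \<rightarrow> (\<Pi>\<^sub>E i\<in>UNIV. space M0)"
      by (auto simp: space_PiM space_M0 PiE_def Pi_def)
  qed
  then show ?thesis unfolding extF_def Pn_M0 .
qed

lemma dep_preimage:
  assumes P: "Measurable.pred Pn P"
    and d: "\<And>q q'. q \<in> space Pn \<Longrightarrow> q' \<in> space Pn \<Longrightarrow> (\<forall>k\<in>F. q k = q' k) \<Longrightarrow> P q = P q'"
  shows "{x \<in> space (PiM F (\<lambda>_. M0)). P (extF F x)} \<in> sets (PiM F (\<lambda>_. M0))"
    and "{q\<in>space Pn. P q} = (\<lambda>q. restrict q F) -` {x \<in> space (PiM F (\<lambda>_. M0)). P (extF F x)} \<inter> space Pn"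
proof -
  have "Measurable.pred (PiM F (\<lambda>_. M0)) (\<lambda>x. P (extF F x))"
    using measurable_compose[OF meas_extF P] by simp
  then show "{x \<in> space (PiM F (\<lambda>_. M0)). P (extF F x)} \<in> sets (PiM F (\<lambda>_. M0))"
    by (simp add: pred_def)
  have key: "restrict q F \<in> space (PiM F (\<lambda>_. M0)) \<and> P (extF F (restrict q F)) = P q" if q: "q \<in> space Pn" for q
  proof -
    have r: "restrict q F \<in> space (PiM F (\<lambda>_. M0))"
      using q by (auto simp: space_PiM space_Pn space_M0)
    have e: "extF F (restrict q F) \<in> space Pn"
      using q by (auto simp: space_Pn extF_def)
    have "P (extF F (restrict q F)) = P q"
      by (rule d[OF e q]) (auto simp: extF_def)
    then show ?thesis using r by simp
  qed
  then show "{q\<in>space Pn. P q} = (\<lambda>q. restrict q F) -` {x \<in> space (PiM F (\<lambda>_. M0)). P (extF F x)} \<inter> space Pn"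
    by auto
qed

lemma indep_dep:
  assumes F: "F1 \<inter> F2 = {}"
    and P1: "Measurable.pred Pn P1" and P2: "Measurable.pred Pn P2"
    and d1: "\<And>q q'. q \<in> space Pn \<Longrightarrow> q' \<in> space Pn \<Longrightarrow> (\<forall>k\<in>F1. q k = q' k) \<Longrightarrow> P1 q = P1 q'"
    and d2: "\<And>q q'. q \<in> space Pn \<Longrightarrow> q' \<in> space Pn \<Longrightarrow> (\<forall>k\<in>F2. q k = q' k) \<Longrightarrow> P2 q = P2 q'"
  shows "measure Pn {q\<in>space Pn. P1 q \<and> P2 q} = measure Pn {q\<in>space Pn. P1 q} * measure Pn {q\<in>space Pn. P2 q}"
proof -
  interpret prob_space Pn by (rule prob_Pn)
  define K where "K = (\<lambda>b::bool. if b then F1 else F2)"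
  define X where "X = (\<lambda>b. {x \<in> space (PiM (K b) (\<lambda>_. M0)). (if b then P1 else P2) (extF (K b) x)})"
  have iv: "indep_vars (\<lambda>b. PiM (K b) (\<lambda>_. M0)) (\<lambda>b \<omega>. restrict (\<lambda>i. \<omega> i) (K b)) UNIV"
    by (rule indep_vars_restrict[OF coords_indep]) (use F in \<open>auto simp: disjoint_family_on_def K_def\<close>)
  have Xs: "X b \<in> sets (PiM (K b) (\<lambda>_. M0))" for b
    unfolding X_def K_def by (cases b) (simp_all only: if_True if_False dep_preimage(1)[OF P1 d1] dep_preimage(1)[OF P2 d2])
  have pre1: "{q\<in>space Pn. P1 q} = (\<lambda>q. restrict q (K True)) -` X True \<inter> space Pn"
    unfolding X_def K_def if_True by (rule dep_preimage(2)[OF P1 d1])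
  have pre2: "{q\<in>space Pn. P2 q} = (\<lambda>q. restrict q (K False)) -` X False \<inter> space Pn"
    unfolding X_def K_def if_False by (rule dep_preimage(2)[OF P2 d2])
  define A where "A = (\<lambda>b. (\<lambda>q. restrict (\<lambda>i. q i) (K b)) -` X b \<inter> space Pn)"
  have "prob (\<Inter>b\<in>UNIV. A b) = (\<Prod>b\<in>UNIV. prob (A b))"
    unfolding A_def by (rule indep_varsD[OF iv]) (simp_all add: Xs)
  moreover have "(\<Inter>b\<in>UNIV. A b) = A True \<inter> A False"
    by (auto simp: UNIV_bool)
  moreover have "(\<Prod>b\<in>UNIV. prob (A b)) = prob (A True) * prob (A False)"
    by (simp add: UNIV_bool)
  moreover have "A True = {q\<in>space Pn. P1 q}" "A False = {q\<in>space Pn. P2 q}"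
    unfolding A_def using pre1 pre2 by simp_all
  moreover have "{q\<in>space Pn. P1 q} \<inter> {q\<in>space Pn. P2 q} = {q\<in>space Pn. P1 q \<and> P2 q}"
    by blast
  ultimately show ?thesis by simp
qed

lemma measure_M0_Ico: "0 \<le> a \<Longrightarrow> a \<le> b \<Longrightarrow> b \<le> 1 \<Longrightarrow> measure M0 {a..<b} = b - a"
  by (subst measure_M0) auto

lemma sets_M0_Ico: "0 \<le> a \<Longrightarrow> b \<le> 1 \<Longrightarrow> {a..<b} \<in> sets M0"
  by (auto simp: sets_M0_iff)

lemma meas_Wt_real[measurable]: "(\<lambda>q. real_of_int (Wt e q a b)) \<in> borel_measurable Pn"
proof -
  have eq: "real_of_int (Wt e q a b) = (\<Sum>k\<in>{a..<b}. (if q k < e then 1 else -1 :: real))" for q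
    unfolding Wt_def wv_def of_int_sum by (intro sum.cong) auto
  show ?thesis unfolding eq by measurable
qed

lemma pred_Wt_le[measurable]: "Measurable.pred Pn (\<lambda>q. Wt e q a b \<le> z)"
proof -
  have "Measurable.pred Pn (\<lambda>q. real_of_int (Wt e q a b) \<le> real_of_int z)" by measurable
  then show ?thesis by simp
qed

lemma pred_Wt_less[measurable]: "Measurable.pred Pn (\<lambda>q. z < Wt e q a b)"
proof -
  have "Measurable.pred Pn (\<lambda>q. real_of_int z < real_of_int (Wt e q a b))" by measurable
  then show ?thesis by simp
qed

definition Ucnt :: "real \<Rightarrow> noise \<Rightarrow> int \<Rightarrow> nat \<Rightarrow> nat" where
  "Ucnt e q a m = card {k \<in> {a..<a + int m}. q k < e}"

lemma Wt_Ucnt: "Wt e q a (a + int m) = 2 * int (Ucnt e q a m) - int m"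
proof (induction m)
  case 0
  then show ?case by (simp add: Ucnt_def)
next
  case (Suc m)
  have iv: "{a..<a + int (Suc m)} = insert (a + int m) {a..<a + int m}" by auto
  have s: "{k \<in> {a..<a + int (Suc m)}. q k < e} =
      (if q (a + int m) < e then insert (a + int m) {k \<in> {a..<a + int m}. q k < e} else {k \<in> {a..<a + int m}. q k < e})"
    unfolding iv by auto
  have "Ucnt e q a (Suc m) = (if q (a + int m) < e then Suc (Ucnt e q a m) else Ucnt e q a m)"
  proof -
    have "finite {k \<in> {a..<a + int m}. q k < e}" by (rule finite_subset[of _ "{a..<a + int m}"]) auto
    moreover have "a + int m \<notin> {k \<in> {a..<a + int m}. q k < e}" by simp
    ultimately show ?thesis unfolding Ucnt_def s by (simp only: if_splits card_insert_disjoint) simp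
  qed
  moreover have "Wt e q a (a + int (Suc m)) = Wt e q a (a + int m) + wv e (q (a + int m))"
  proof -
    have eq: "a + int (Suc m) = a + int m + 1" by simp
    show ?thesis unfolding eq by (rule Wt_snoc) simp
  qed
  ultimately show ?case using Suc by (simp add: wv_def)
qed

lemma prob_space_Pn_measure_le1: "measure Pn A \<le> 1"
  using prob_space.prob_le_1[OF prob_Pn] .

lemma tail_U:
  assumes e: "0 \<le> e" "e \<le> 1/4096"
    and A: "A \<in> sets Pn" "A \<subseteq> {q\<in>space Pn. m \<le> 4 * Ucnt e q a m}"
  shows "measure Pn A \<le> (1/4) ^ m"
proof (cases "m = 0")
  case True
  then show ?thesis using prob_space_Pn_measure_le1[of A] by simp
next
  case False
  interpret prob_space Pn by (rule prob_Pn)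
  define j where "j = (m + 3) div 4"
  define W where "W = {a..<a + int m}"
  define Sub where "Sub = {S. S \<subseteq> W \<and> card S = j}"
  define R where "R = (\<lambda>S. {q\<in>space Pn. \<forall>k\<in>S. q k \<in> {0..<e}})"
  have fW: "finite W" unfolding W_def by simp
  have cW: "card W = m" unfolding W_def by simp
  have fSub: "finite Sub" unfolding Sub_def using fW by (auto intro: finite_subset[of _ "Pow W"])
  have cSub: "card Sub = m choose j" unfolding Sub_def using n_subsets[OF fW, of j] cW by simp
  have RS: "R S \<in> sets Pn" if "S \<in> Sub" for S
  proof -
    have "finite S" using that fW unfolding Sub_def by (auto intro: finite_subset)
    have "Measurable.pred Pn (\<lambda>q. \<forall>k\<in>S. q k \<in> {0..<e})"
      using \<open>finite S\<close> by measurable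
    then show ?thesis unfolding R_def by (simp add: pred_def)
  qed
  have mR: "measure Pn (R S) = e ^ j" if "S \<in> Sub" for S
  proof -
    have fS: "finite S" "card S = j" using that fW unfolding Sub_def by (auto intro: finite_subset)
    have "measure Pn (R S) = (\<Prod>k\<in>S. measure M0 {0..<e})"
      unfolding R_def using fS e by (intro rect) (auto intro!: sets_M0_Ico)
    also have "\<dots> = e ^ j" using fS e by (simp add: measure_M0_Ico)
    finally show ?thesis .
  qed
  have sub: "A \<subseteq> (\<Union>S\<in>Sub. R S)"
  proof
    fix q assume "q \<in> A"
    then have q: "q \<in> space Pn" "m \<le> 4 * Ucnt e q a m" using A by auto
    have "j \<le> card {k \<in> W. q k < e}" using q(2) unfolding Ucnt_def W_def j_def by simp
    then obtain S where S: "S \<subseteq> {k \<in> W. q k < e}" "card S = j" "finite S"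
      by (rule obtain_subset_with_card_n)
    have "q \<in> R S" unfolding R_def using S q(1) by (auto simp: space_Pn)
    moreover have "S \<in> Sub" using S unfolding Sub_def by auto
    ultimately show "q \<in> (\<Union>S\<in>Sub. R S)" by blast
  qed
  have "measure Pn A \<le> measure Pn (\<Union>S\<in>Sub. R S)"
    using sub RS fSub by (intro finite_measure_mono) auto
  also have "\<dots> \<le> (\<Sum>S\<in>Sub. measure Pn (R S))"
    using RS fSub by (intro measure_UNION_le) auto
  also have "\<dots> = real (m choose j) * e ^ j"
    using mR cSub by simp
  also have "\<dots> \<le> 2 ^ m * (1/8) ^ m"
  proof (rule mult_mono)
    show "real (m choose j) \<le> 2 ^ m" using binomial_le_pow2[of m j] by (simp add: of_nat_le_iff[symmetric])
    have "e ^ j \<le> (1/4096) ^ j" using e by (intro power_mono) auto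
    also have "(1/4096::real) ^ j = (1/8) ^ (4 * j)" by (simp add: power_mult power_divide)
    also have "\<dots> \<le> (1/8) ^ m" using j_def by (intro power_decreasing) auto
    finally show "e ^ j \<le> (1/8) ^ m" .
  qed (use e in auto)
  also have "\<dots> = (2 * (1/8)) ^ m" by (rule power_mult_distrib[symmetric])
  also have "\<dots> = (1/4) ^ m" by simp
  finally show ?thesis .
qed

lemma fin_Pn: "finite_measure Pn"
  using prob_Pn by (simp add: prob_space_def)

lemma Wt_cong: "(\<And>k. u \<le> k \<Longrightarrow> k < b \<Longrightarrow> q k = q' k) \<Longrightarrow> Wt e q u b = Wt e q' u b"
  unfolding Wt_def by (intro sum.cong) auto

lemma tail_W:
  assumes e: "0 \<le> e" "e \<le> 1/4096"
    and A: "A \<in> sets Pn" "A \<subseteq> {q\<in>space Pn. int d < Wt e q a (a + int m)}"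
  shows "measure Pn A \<le> (1/2) ^ m * (1/2) ^ d"
proof (cases "m \<le> d")
  case True
  have "A = {}"
  proof -
    have "Wt e q a (a + int m) \<le> int m" for q using Wt_le[of a "a + int m" e q] by simp
    then have "\<not> int d < Wt e q a (a + int m)" for q using True by (metis of_nat_mono order.trans not_less)
    then show ?thesis using A by blast
  qed
  then show ?thesis by simp
next
  case False
  have "A \<subseteq> {q\<in>space Pn. m \<le> 4 * Ucnt e q a m}"
    using A(2) by (auto simp: Wt_Ucnt)
  then have "measure Pn A \<le> (1/4) ^ m" using tail_U[OF e A(1)] by blast
  also have "(1/4::real) ^ m = (1/2) ^ m * (1/2) ^ m" by (simp add: power_mult_distrib[symmetric])
  also have "\<dots> \<le> (1/2) ^ m * (1/2) ^ d"
    using False by (intro mult_left_mono power_decreasing) auto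
  finally show ?thesis .
qed

lemma sup_back:
  assumes e: "0 \<le> e" "e \<le> 1/4096"
  shows "measure Pn {q\<in>space Pn. \<exists>u<b. int T < Wt e q u b} \<le> (1/2) ^ T"
proof -
  interpret prob_space Pn by (rule prob_Pn)
  define A where "A = (\<lambda>m::nat. {q\<in>space Pn. int T < Wt e q (b - int (Suc m)) b})"
  have As: "A m \<in> sets Pn" for m unfolding A_def by measurable
  have mA: "measure Pn (A m) \<le> (1/2) ^ Suc m * (1/2) ^ T" for m
  proof (rule tail_W[OF e As])
    show "A m \<subseteq> {q \<in> space Pn. int T < Wt e q (b - int (Suc m)) (b - int (Suc m) + int (Suc m))}"
      unfolding A_def by simp
  qed
  have sg: "summable (\<lambda>m. (1/2::real) ^ Suc m * (1/2) ^ T)"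
    using power_half_series by (intro summable_mult2) (simp add: sums_summable)
  have sA: "summable (\<lambda>m. measure Pn (A m))"
    by (rule summable_comparison_test[OF _ sg]) (use mA in auto)
  have "{q\<in>space Pn. \<exists>u<b. int T < Wt e q u b} = (\<Union>m. A m)"
  proof (intro set_eqI iffI)
    fix q assume "q \<in> {q\<in>space Pn. \<exists>u<b. int T < Wt e q u b}"
    then obtain u where "q \<in> space Pn" "u < b" "int T < Wt e q u b" by auto
    moreover have "b - int (Suc (nat (b - u - 1))) = u" using \<open>u < b\<close> by simp
    ultimately have "q \<in> A (nat (b - u - 1))" unfolding A_def by simp
    then show "q \<in> (\<Union>m. A m)" by blast
  next
    fix q assume "q \<in> (\<Union>m. A m)"
    then show "q \<in> {q\<in>space Pn. \<exists>u<b. int T < Wt e q u b}" unfolding A_def by force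
  qed
  then have "measure Pn {q\<in>space Pn. \<exists>u<b. int T < Wt e q u b} = measure Pn (\<Union>m. A m)" by simp
  also have "\<dots> \<le> (\<Sum>m. measure Pn (A m))"
    using As sA by (intro finite_measure_subadditive_countably) auto
  also have "\<dots> \<le> (\<Sum>m. (1/2::real) ^ Suc m * (1/2) ^ T)"
    by (rule suminf_le[OF mA sA sg])
  also have "\<dots> = (\<Sum>m. (1/2::real) ^ Suc m) * (1/2) ^ T"
    by (rule suminf_mult2[symmetric, OF sums_summable[OF power_half_series]])
  also have "(\<Sum>m. (1/2::real) ^ Suc m) = 1"
    using power_half_series by (simp add: sums_iff)
  finally show ?thesis by simp
qed

lemma AE_lt1: "AE q in Pn. \<forall>k. q k < 1"
proof (subst AE_all_countable, intro allI)
  fix k :: int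
  have "emeasure Pn {q\<in>space Pn. q k \<in> {1}} = emeasure M0 {1}"
    unfolding Pn_M0 by (rule PP.emeasure_PiM_Collect_single) (auto simp: sets_M0_iff)
  also have "\<dots> = 0" by (subst emeasure_M0) auto
  finally have "{q\<in>space Pn. q k \<in> {1}} \<in> null_sets Pn"
    by (auto simp: null_sets_def)
  then show "AE q in Pn. q k < 1"
    by (rule AE_I') (auto simp: space_Pn intro: antisym)
qed

lemma AE_BW:
  assumes e: "0 \<le> e" "e \<le> 1/4096"
  shows "AE q in Pn. \<forall>r d. \<exists>s0. \<forall>s\<le>s0. Wt e q s r \<le> - d"
proof -
  have "AE q in Pn. \<forall>d. \<exists>s0. \<forall>s\<le>s0. Wt e q s r \<le> - d" for r
  proof -
    define A where "A = (\<lambda>m::nat. {q\<in>space Pn. 0 < 2 * Wt e q (r - int m) r + int m})"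
    have As: "A m \<in> sets Pn" for m
    proof -
      have "Measurable.pred Pn (\<lambda>q. 0 < 2 * real_of_int (Wt e q (r - int m) r) + real m)" by measurable
      moreover have "(0 < 2 * real_of_int (Wt e q (r - int m) r) + real m) = (0 < 2 * Wt e q (r - int m) r + int m)" for q
        by linarith
      ultimately show ?thesis unfolding A_def by (simp add: pred_def)
    qed
    have mA: "measure Pn (A m) \<le> (1/4) ^ m" for m
    proof (rule tail_U[OF e As])
      show "A m \<subseteq> {q \<in> space Pn. m \<le> 4 * Ucnt e q (r - int m) m}"
        unfolding A_def using Wt_Ucnt[of e _ "r - int m" m] by auto
    qed
    have sA: "summable (\<lambda>m. measure Pn (A m))"
      by (rule summable_comparison_test[OF _ summable_geometric[of "1/4::real"]]) (use mA in auto)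
    have "AE q in Pn. eventually (\<lambda>m. q \<in> space Pn - A m) sequentially"
      by (rule borel_cantelli_AE1[OF As _ sA]) (simp add: finite_measure.emeasure_eq_measure[OF fin_Pn])
    then show ?thesis
    proof (rule AE_mp, intro AE_I2 impI allI)
      fix q d assume q: "q \<in> space Pn" and ev: "eventually (\<lambda>m. q \<in> space Pn - A m) sequentially"
      then obtain m0 where m0: "\<And>m. m \<ge> m0 \<Longrightarrow> q \<notin> A m" unfolding eventually_sequentially by blast
      show "\<exists>s0. \<forall>s\<le>s0. Wt e q s r \<le> - d"
      proof (intro exI allI impI)
        fix s assume s: "s \<le> r - int m0 - 2 * \<bar>d\<bar>"
        define m where "m = nat (r - s)"
        have "m \<ge> m0" "r - int m = s" "int m \<ge> 2 * \<bar>d\<bar>" using s unfolding m_def by auto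
        then have "\<not> 0 < 2 * Wt e q s r + int m" using m0[of m] q unfolding A_def by auto
        then show "Wt e q s r \<le> - d" using \<open>int m \<ge> 2 * \<bar>d\<bar>\<close> by linarith
      qed
    qed
  qed
  then show ?thesis by (subst AE_all_countable) simp
qed

definition Bev :: "real \<Rightarrow> int \<Rightarrow> nat \<Rightarrow> noise \<Rightarrow> bool" where
  "Bev c b L q \<longleftrightarrow> (\<forall>k\<in>{b..<b + int L}. c \<le> q k \<and> q k < 1)"

lemma pred_Bev[measurable]: "Measurable.pred Pn (Bev c b L)"
  unfolding Bev_def by measurable

lemma measure_Bev:
  assumes "0 \<le> c" "c \<le> 1"
  shows "measure Pn {q\<in>space Pn. Bev c b L q} = (1 - c) ^ L"
proof -
  have "{q\<in>space Pn. Bev c b L q} = {q\<in>space Pn. \<forall>k\<in>{b..<b + int L}. q k \<in> {c..<1}}"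
    unfolding Bev_def by auto
  also have "measure Pn \<dots> = (\<Prod>k\<in>{b..<b + int L}. measure M0 {c..<1})"
    using assms by (intro rect) (auto intro!: sets_M0_Ico)
  also have "\<dots> = (1 - c) ^ L" using assms by (simp add: measure_M0_Ico)
  finally show ?thesis .
qed

lemma noB:
  assumes c: "0 \<le> c" "c \<le> 1"
    and dj: "\<And>i j. i < J \<Longrightarrow> j < J \<Longrightarrow> i \<noteq> j \<Longrightarrow> {pos i..<pos i + int L} \<inter> {pos j..<pos j + int L} = {}"
  shows "n \<le> J \<Longrightarrow> measure Pn {q\<in>space Pn. \<forall>i<n. \<not> Bev c (pos i) L q} = (1 - (1 - c) ^ L) ^ n"
proof (induction n)
  case 0
  then show ?case using prob_space.prob_space[OF prob_Pn] by simp
next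
  case (Suc n)
  interpret prob_space Pn by (rule prob_Pn)
  have "measure Pn {q\<in>space Pn. (\<forall>i<n. \<not> Bev c (pos i) L q) \<and> \<not> Bev c (pos n) L q} =
        measure Pn {q\<in>space Pn. \<forall>i<n. \<not> Bev c (pos i) L q} * measure Pn {q\<in>space Pn. \<not> Bev c (pos n) L q}"
  proof (rule indep_dep[where ?F1.0="\<Union>i<n. {pos i..<pos i + int L}" and ?F2.0="{pos n..<pos n + int L}"])
    show "(\<Union>i<n. {pos i..<pos i + int L}) \<inter> {pos n..<pos n + int L} = {}"
    proof -
      have "{pos i..<pos i + int L} \<inter> {pos n..<pos n + int L} = {}" if "i < n" for i
        using dj[of i n] Suc.prems that by simp
      then show ?thesis by blast
    qed
    show "Measurable.pred Pn (\<lambda>q. \<forall>i<n. \<not> Bev c (pos i) L q)" by measurable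
    show "Measurable.pred Pn (\<lambda>q. \<not> Bev c (pos n) L q)" by measurable
    show "(\<forall>i<n. \<not> Bev c (pos i) L q) = (\<forall>i<n. \<not> Bev c (pos i) L q')"
      if "\<forall>k\<in>\<Union>i<n. {pos i..<pos i + int L}. q k = q' k" for q q'
      using that unfolding Bev_def by auto
    show "(\<not> Bev c (pos n) L q) = (\<not> Bev c (pos n) L q')"
      if "\<forall>k\<in>{pos n..<pos n + int L}. q k = q' k" for q q'
      using that unfolding Bev_def by auto
  qed
  moreover have "{q\<in>space Pn. \<not> Bev c (pos n) L q} = space Pn - {q\<in>space Pn. Bev c (pos n) L q}" by auto
  moreover have "{q\<in>space Pn. Bev c (pos n) L q} \<in> sets Pn" by measurable
  moreover have "{q\<in>space Pn. \<forall>i<Suc n. \<not> Bev c (pos i) L q} =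
      {q\<in>space Pn. (\<forall>i<n. \<not> Bev c (pos i) L q) \<and> \<not> Bev c (pos n) L q}"
    by (auto simp: less_Suc_eq)
  ultimately show ?case using Suc measure_Bev[OF c, of "pos n" L] prob_compl by simp
qed

lemma block_arg:
  fixes B S :: "nat \<Rightarrow> noise \<Rightarrow> bool"
  assumes mB[measurable]: "\<And>j. Measurable.pred Pn (B j)" and mS[measurable]: "\<And>j. Measurable.pred Pn (S j)"
    and nb: "measure Pn {q\<in>space Pn. \<forall>j<J. \<not> B j q} \<le> x"
    and ind: "\<And>j. j < J \<Longrightarrow> measure Pn {q\<in>space Pn. (B j q \<and> (\<forall>i<j. \<not> B i q)) \<and> \<not> S j q} \<le>
        measure Pn {q\<in>space Pn. B j q \<and> (\<forall>i<j. \<not> B i q)} * \<eta>"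
    and eta: "\<eta> \<ge> 0"
  shows "measure Pn {q\<in>space Pn. \<not> (\<exists>j<J. B j q \<and> S j q)} \<le> x + \<eta>"
proof -
  interpret prob_space Pn by (rule prob_Pn)
  define E where "E = (\<lambda>j. {q\<in>space Pn. B j q \<and> (\<forall>i<j. \<not> B i q)})"
  define E' where "E' = (\<lambda>j. {q\<in>space Pn. (B j q \<and> (\<forall>i<j. \<not> B i q)) \<and> \<not> S j q})"
  have Es: "E j \<in> sets Pn" for j unfolding E_def by measurable
  have E's: "E' j \<in> sets Pn" for j unfolding E'_def by measurable
  have sub: "{q\<in>space Pn. \<not> (\<exists>j<J. B j q \<and> S j q)} \<subseteq> {q\<in>space Pn. \<forall>j<J. \<not> B j q} \<union> (\<Union>j<J. E' j)"
  proof
    fix q assume q: "q \<in> {q\<in>space Pn. \<not> (\<exists>j<J. B j q \<and> S j q)}"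
    show "q \<in> {q\<in>space Pn. \<forall>j<J. \<not> B j q} \<union> (\<Union>j<J. E' j)"
    proof (cases "\<exists>j<J. B j q")
      case True
      define j where "j = (LEAST j. B j q)"
      have Bj: "B j q" unfolding j_def using True by (metis LeastI)
      have jJ: "j < J" using True unfolding j_def by (metis Least_le order.strict_trans1)
      have "\<forall>i<j. \<not> B i q" unfolding j_def using not_less_Least by blast
      then have "q \<in> E' j" unfolding E'_def using q Bj jJ by auto
      then show ?thesis using jJ by blast
    qed (use q in auto)
  qed
  have dE: "disjoint_family_on E {..<J}"
    unfolding disjoint_family_on_def E_def by (auto, metis linorder_neqE_nat)
  have "measure Pn {q\<in>space Pn. \<not> (\<exists>j<J. B j q \<and> S j q)} \<le> measure Pn ({q\<in>space Pn. \<forall>j<J. \<not> B j q} \<union> (\<Union>j<J. E' j))"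
    using sub E's by (intro finite_measure_mono) auto
  also have "\<dots> \<le> measure Pn {q\<in>space Pn. \<forall>j<J. \<not> B j q} + measure Pn (\<Union>j<J. E' j)"
    using E's by (intro measure_Un_le) auto
  also have "measure Pn (\<Union>j<J. E' j) \<le> (\<Sum>j<J. measure Pn (E' j))"
    using E's by (intro measure_UNION_le) auto
  also have "\<dots> \<le> (\<Sum>j<J. measure Pn (E j) * \<eta>)"
    using ind unfolding E_def E'_def by (intro sum_mono) auto
  also have "\<dots> = measure Pn (\<Union>j<J. E j) * \<eta>"
    using Es dE by (subst measure_finite_Union) (auto simp: sum_distrib_right)
  also have "\<dots> \<le> 1 * \<eta>" using eta by (intro mult_right_mono) auto
  finally show ?thesis using nb by simp
qed

lemma zero_by_bounds:
  fixes x :: real and a :: "nat \<Rightarrow> real"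
  assumes "\<And>H J. x \<le> a H ^ J + (1/2) ^ H" "\<And>H. 0 \<le> a H" "\<And>H. a H < 1"
  shows "x \<le> 0"
proof -
  have "x \<le> (1/2) ^ H" for H
  proof (rule LIMSEQ_le_const)
    show "(\<lambda>J. a H ^ J + (1/2) ^ H) \<longlonglongrightarrow> (1/2) ^ H"
    proof -
      have "norm (a H) < 1" using assms(2,3)[of H] by simp
      from tendsto_add[OF LIMSEQ_power_zero[OF this] tendsto_const[of "(1/2::real)^H"]]
      show ?thesis by simp
    qed
    show "\<exists>N. \<forall>n\<ge>N. x \<le> a H ^ n + (1 / 2) ^ H" using assms(1) by blast
  qed
  then show ?thesis
    by (intro LIMSEQ_le_const[OF LIMSEQ_power_zero[of "1/2::real"]]) auto
qed

lemma blk_disj: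
  fixes x y L :: int
  assumes "x \<noteq> y" "0 \<le> L"
  shows "{x * L..<x * L + L} \<inter> {y * L..<y * L + L} = {}"
proof -
  have *: "{a * L..<a * L + L} \<inter> {b * L..<b * L + L} = {}" if "a < b" for a b :: int
  proof -
    have "(a + 1) * L \<le> b * L" using that assms(2) by (intro mult_right_mono) auto
    then show ?thesis by (auto simp: algebra_simps)
  qed
  show ?thesis using assms(1) *[of x y] *[of y x] by (cases "x < y") (auto simp: Int_commute)
qed

lemma null_from_bounds:
  assumes "N \<in> sets Pn" "measure Pn N \<le> 0"
  shows "N \<in> null_sets Pn"
proof -
  have "measure Pn N = 0" using assms(2) measure_nonneg[of Pn N] by linarith
  then have "emeasure Pn N = 0" by (simp add: finite_measure.emeasure_eq_measure[OF fin_Pn])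
  then show ?thesis using assms(1) by (simp add: null_sets_def)
qed

lemma pth_facts:
  assumes g: "g1 > 0" "g2 > 0" "K \<ge> 1"
  shows "0 \<le> pth g1 g2 K" "pth g1 g2 K \<le> pth g1 g2 1" "0 \<le> pth g1 g2 1" "pth g1 g2 1 < 1"
proof -
  show "0 \<le> pth g1 g2 K" unfolding pth_def using g by (intro divide_nonneg_pos) (auto intro!: add_pos_nonneg)
  show "pth g1 g2 K \<le> pth g1 g2 1" using pth_mono[OF g(1,2) g(3)] .
  show "0 \<le> pth g1 g2 1" unfolding pth_def using g by (intro divide_nonneg_pos) auto
  show "pth g1 g2 1 < 1" unfolding pth_def using g by simp
qed

lemma AE_LAD:
  assumes g: "g1 > 0" "g2 > 0" "K \<ge> 1" and eK: "pth g1 g2 K \<le> 1/4096"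
  shows "AE q in Pn. \<exists>r. r + int K + 1 \<le> 0 \<and> (\<forall>k. r \<le> k \<and> k < r + int K + 1 \<longrightarrow> pth g1 g2 1 \<le> q k) \<and>
            (\<forall>u\<le>r. Wt (pth g1 g2 K) q u r \<le> 0)"
    (is "AE q in Pn. ?G q")
proof -
  define e where "e = pth g1 g2 K"
  define c where "c = pth g1 g2 1"
  have e0: "0 \<le> e" "e \<le> 1/4096" "e \<le> c" "0 \<le> c" "c < 1"
    using pth_facts[OF g] eK unfolding e_def c_def by auto
  define L where "L = (\<lambda>H::nat. H + K + 1)"
  define pos where "pos = (\<lambda>H j::nat. (- int (Suc j)) * int (L H))"
  define B where "B = (\<lambda>H j. Bev c (pos H j) (L H))"
  define S where "S = (\<lambda>H j q. \<forall>u<pos H j. Wt e q u (pos H j) \<le> int H)"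
  define N where "N = (\<lambda>H J. {q\<in>space Pn. \<not> (\<exists>j<J. B H j q \<and> S H j q)})"
  have mB[measurable]: "Measurable.pred Pn (B H j)" for H j unfolding B_def by measurable
  have mS[measurable]: "Measurable.pred Pn (S H j)" for H j unfolding S_def by measurable
  have Ns: "N H J \<in> sets Pn" for H J unfolding N_def by measurable
  have good: "\<exists>r. r + int K + 1 \<le> 0 \<and> (\<forall>k. r \<le> k \<and> k < r + int K + 1 \<longrightarrow> c \<le> q k) \<and>
            (\<forall>u\<le>r. Wt e q u r \<le> 0)" if "B H j q" "S H j q" for H j q
  proof (intro exI[of _ "pos H j + int H"] conjI allI impI)
    have pl: "pos H j + int (L H) \<le> 0" unfolding pos_def by (simp add: algebra_simps)
    then show "pos H j + int H + int K + 1 \<le> 0" unfolding L_def by simp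
    fix k assume "pos H j + int H \<le> k \<and> k < pos H j + int H + int K + 1"
    then show "c \<le> q k" using that(1) unfolding B_def Bev_def L_def by auto
  next
    fix u assume u: "u \<le> pos H j + int H"
    have blk: "\<forall>k. pos H j \<le> k \<and> k < pos H j + int H \<longrightarrow> e \<le> q k"
      using that(1) e0 unfolding B_def Bev_def L_def by force
    show "Wt e q u (pos H j + int H) \<le> 0"
    proof (cases "u < pos H j")
      case True
      have "Wt e q u (pos H j + int H) = Wt e q u (pos H j) + Wt e q (pos H j) (pos H j + int H)"
        using True by (intro Wt_split) auto
      also have "Wt e q (pos H j) (pos H j + int H) = - int H"
        using Wt_D[of "pos H j" "pos H j + int H" e q] blk by simp
      finally show ?thesis using that(2) True unfolding S_def by force
    next
      case False
      have "Wt e q u (pos H j + int H) = - (pos H j + int H - u)"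
        using False u blk by (intro Wt_D) auto
      then show ?thesis using u by simp
    qed
  qed
  have bound: "measure Pn (N H J) \<le> (1 - (1 - c) ^ L H) ^ J + (1/2) ^ H" for H J
    unfolding N_def
  proof (rule block_arg[OF mB mS])
    show "measure Pn {q \<in> space Pn. \<forall>j<J. \<not> B H j q} \<le> (1 - (1 - c) ^ L H) ^ J"
    proof -
      have dj: "{pos H i..<pos H i + int (L H)} \<inter> {pos H j..<pos H j + int (L H)} = {}"
        if "i < J" "j < J" "i \<noteq> j" for i j
        unfolding pos_def using that by (intro blk_disj) auto
      have "measure Pn {q \<in> space Pn. \<forall>j<J. \<not> Bev c (pos H j) (L H) q} = (1 - (1 - c) ^ L H) ^ J"
        by (rule noB[of c J "pos H" "L H" J]) (use e0 dj in auto)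
      then show ?thesis unfolding B_def by simp
    qed
    show "(0::real) \<le> (1/2) ^ H" by simp
    fix j assume "j < J"
    interpret prob_space Pn by (rule prob_Pn)
    have "measure Pn {q \<in> space Pn. (B H j q \<and> (\<forall>i<j. \<not> B H i q)) \<and> \<not> S H j q} =
        measure Pn {q \<in> space Pn. B H j q \<and> (\<forall>i<j. \<not> B H i q)} * measure Pn {q \<in> space Pn. \<not> S H j q}"
    proof (rule indep_dep[where ?F1.0="{pos H j..<0}" and ?F2.0="{..<pos H j}"])
      show "{pos H j..<0} \<inter> {..<pos H j} = {}" by auto
      show "Measurable.pred Pn (\<lambda>q. B H j q \<and> (\<forall>i<j. \<not> B H i q))" by measurable
      show "Measurable.pred Pn (\<lambda>q. \<not> S H j q)" by measurable
      have inc: "{pos H i..<pos H i + int (L H)} \<subseteq> {pos H j..<0}" if "i \<le> j" for i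
      proof -
        have "(- int (Suc j)) * int (L H) \<le> (- int (Suc i)) * int (L H)"
          using that by (intro mult_right_mono) auto
        moreover have "(- int (Suc i)) * int (L H) + int (L H) \<le> 0" by (simp add: algebra_simps)
        ultimately show ?thesis unfolding pos_def by auto
      qed
      show "(B H j q \<and> (\<forall>i<j. \<not> B H i q)) = (B H j q' \<and> (\<forall>i<j. \<not> B H i q'))"
        if "\<forall>k\<in>{pos H j..<0}. q k = q' k" for q q'
      proof -
        have "B H i q = B H i q'" if "i \<le> j" for i
          using inc[OF that] \<open>\<forall>k\<in>{pos H j..<0}. q k = q' k\<close> unfolding B_def Bev_def by auto
        then show ?thesis by auto
      qed
      show "(\<not> S H j q) = (\<not> S H j q')" if "\<forall>k\<in>{..<pos H j}. q k = q' k" for q q'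
      proof -
        have "Wt e q u (pos H j) = Wt e q' u (pos H j)" for u
          using that by (intro Wt_cong) auto
        then show ?thesis unfolding S_def by simp
      qed
    qed
    also have "measure Pn {q \<in> space Pn. \<not> S H j q} \<le> (1/2) ^ H"
    proof -
      have "{q \<in> space Pn. \<not> S H j q} = {q\<in>space Pn. \<exists>u<pos H j. int H < Wt e q u (pos H j)}"
        unfolding S_def by auto
      then show ?thesis using sup_back[OF e0(1,2)] by simp
    qed
    finally show "measure Pn {q \<in> space Pn. (B H j q \<and> (\<forall>i<j. \<not> B H i q)) \<and> \<not> S H j q} \<le>
        measure Pn {q \<in> space Pn. B H j q \<and> (\<forall>i<j. \<not> B H i q)} * (1/2) ^ H"
      by (simp add: mult_left_mono)
  qed
  define N0 where "N0 = (\<Inter>H. \<Inter>J. N H J)"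
  have N0s: "N0 \<in> sets Pn" unfolding N0_def using Ns by auto
  have "measure Pn N0 \<le> 0"
  proof (rule zero_by_bounds)
    fix H J
    have "measure Pn N0 \<le> measure Pn (N H J)"
      using Ns N0s unfolding N0_def by (intro finite_measure.finite_measure_mono[OF fin_Pn]) auto
    then show "measure Pn N0 \<le> (1 - (1 - c) ^ L H) ^ J + (1/2) ^ H" using bound[of H J] by simp
  next
    fix H
    have "0 < (1 - c) ^ L H" using e0 by simp
    moreover have "(1 - c) ^ L H \<le> 1" using e0 by (intro power_le_one) auto
    ultimately show "0 \<le> 1 - (1 - c) ^ L H" "1 - (1 - c) ^ L H < 1" by auto
  qed
  then have "N0 \<in> null_sets Pn" by (rule null_from_bounds[OF N0s])
  then show ?thesis
  proof (rule AE_I')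
    show "{q \<in> space Pn. \<not> ?G q} \<subseteq> N0"
      unfolding N0_def N_def using good unfolding e_def c_def by blast
  qed
qed

lemma AE_FW:
  assumes g: "g1 > 0" "g2 > 0" "K \<ge> 1" and eK: "pth g1 g2 K \<le> 1/4096"
  shows "AE q in Pn. FWg g1 g2 K M q"
proof -
  define e where "e = pth g1 g2 K"
  define c where "c = pth g1 g2 1"
  have e0: "0 \<le> e" "e \<le> 1/4096" "e \<le> c" "0 \<le> c" "c < 1"
    using pth_facts[OF g] eK unfolding e_def c_def by auto
  define L where "L = (\<lambda>T::nat. T + M + K + 1)"
  define pos where "pos = (\<lambda>T J j::nat. int (J - 1 - j) * int (L T))"
  define B where "B = (\<lambda>T J j. Bev c (pos T J j) (L T))"
  define S where "S = (\<lambda>T J j q. \<forall>u. 0 \<le> u \<and> u < pos T J j \<longrightarrow> Wt e q u (pos T J j) \<le> int T)"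
  define N where "N = (\<lambda>T J. {q\<in>space Pn. \<not> (\<exists>j<J. B T J j q \<and> S T J j q)})"
  have mB[measurable]: "Measurable.pred Pn (B T J j)" for T J j unfolding B_def by measurable
  have mS[measurable]: "Measurable.pred Pn (S T J j)" for T J j unfolding S_def by measurable
  have Ns: "N T J \<in> sets Pn" for T J unfolding N_def by measurable
  have good: "\<exists>r::nat. (\<forall>k. int r \<le> k \<and> k < int r + int K + 1 \<longrightarrow> c \<le> q k) \<and>
      (\<forall>u. 0 \<le> u \<and> u \<le> int r \<longrightarrow> Wt e q u (int r) \<le> 0) \<and>
      int M + Wt e q 0 (int r) \<le> 0" if "B T J j q" "S T J j q" for T J j q
  proof -
    define p where "p = pos T J j"
    have p0: "0 \<le> p" unfolding p_def pos_def by simp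
    define r where "r = nat p + T + M"
    have r: "int r = p + int T + int M" unfolding r_def using p0 by simp
    have blk: "\<forall>k. p \<le> k \<and> k < p + int (L T) \<longrightarrow> c \<le> q k"
      using that(1) unfolding B_def Bev_def p_def by auto
    have blke: "\<forall>k. p \<le> k \<and> k < int r \<longrightarrow> e \<le> q k"
      using blk e0 r unfolding L_def by force
    have Wpr: "Wt e q p (int r) = - (int T + int M)"
      using Wt_D[of p "int r" e q] blke r by simp
    have lad: "Wt e q u (int r) \<le> - int M" if "0 \<le> u" "u < p" for u
    proof -
      have "Wt e q u (int r) = Wt e q u p + Wt e q p (int r)"
        using that r by (intro Wt_split) auto
      moreover have "Wt e q u p \<le> int T" using \<open>S T J j q\<close> that unfolding S_def p_def by auto
      ultimately show ?thesis using Wpr by simp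
    qed
    show ?thesis
    proof (intro exI[of _ r] conjI allI impI)
      fix k assume "int r \<le> k \<and> k < int r + int K + 1"
      then show "c \<le> q k" using blk r unfolding L_def by auto
    next
      fix u assume u: "0 \<le> u \<and> u \<le> int r"
      show "Wt e q u (int r) \<le> 0"
      proof (cases "u < p")
        case True
        then show ?thesis using lad[of u] u by simp
      next
        case False
        have "Wt e q u (int r) = - (int r - u)"
          using False u blke by (intro Wt_D) auto
        then show ?thesis using u by simp
      qed
    next
      show "int M + Wt e q 0 (int r) \<le> 0"
      proof (cases "0 < p")
        case True
        then show ?thesis using lad[of 0] by simp
      next
        case False
        then have "p = 0" using p0 by simp
        then show ?thesis using Wpr by simp
      qed
    qed
  qed
  have bound: "measure Pn (N T J) \<le> (1 - (1 - c) ^ L T) ^ J + (1/2) ^ T" for T J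
    unfolding N_def
  proof (rule block_arg[OF mB mS])
    show "measure Pn {q \<in> space Pn. \<forall>j<J. \<not> B T J j q} \<le> (1 - (1 - c) ^ L T) ^ J"
    proof -
      have dj: "{pos T J i..<pos T J i + int (L T)} \<inter> {pos T J j..<pos T J j + int (L T)} = {}"
        if "i < J" "j < J" "i \<noteq> j" for i j
        unfolding pos_def using that by (intro blk_disj) auto
      have "measure Pn {q \<in> space Pn. \<forall>j<J. \<not> Bev c (pos T J j) (L T) q} = (1 - (1 - c) ^ L T) ^ J"
        by (rule noB[of c J "pos T J" "L T" J]) (use e0 dj in auto)
      then show ?thesis unfolding B_def by simp
    qed
    show "(0::real) \<le> (1/2) ^ T" by simp
    fix j assume "j < J"
    interpret prob_space Pn by (rule prob_Pn)
    have "measure Pn {q \<in> space Pn. (B T J j q \<and> (\<forall>i<j. \<not> B T J i q)) \<and> \<not> S T J j q} =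
        measure Pn {q \<in> space Pn. B T J j q \<and> (\<forall>i<j. \<not> B T J i q)} * measure Pn {q \<in> space Pn. \<not> S T J j q}"
    proof (rule indep_dep[where ?F1.0="{pos T J j..<int J * int (L T)}" and ?F2.0="{0..<pos T J j}"])
      show "{pos T J j..<int J * int (L T)} \<inter> {0..<pos T J j} = {}" by auto
      show "Measurable.pred Pn (\<lambda>q. B T J j q \<and> (\<forall>i<j. \<not> B T J i q))" by measurable
      show "Measurable.pred Pn (\<lambda>q. \<not> S T J j q)" by measurable
      have inc: "{pos T J i..<pos T J i + int (L T)} \<subseteq> {pos T J j..<int J * int (L T)}" if "i \<le> j" for i
      proof -
        have "int (J - 1 - j) * int (L T) \<le> int (J - 1 - i) * int (L T)"
          using that by (intro mult_right_mono) auto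
        moreover have "int (J - 1 - i) * int (L T) + int (L T) \<le> int J * int (L T)"
        proof -
          have "int (J - 1 - i) * int (L T) + int (L T) = int (J - i) * int (L T)"
            using \<open>j < J\<close> that by (simp add: algebra_simps of_nat_diff)
          also have "\<dots> \<le> int J * int (L T)" by (intro mult_right_mono) auto
          finally show ?thesis .
        qed
        ultimately show ?thesis unfolding pos_def by auto
      qed
      show "(B T J j q \<and> (\<forall>i<j. \<not> B T J i q)) = (B T J j q' \<and> (\<forall>i<j. \<not> B T J i q'))"
        if "\<forall>k\<in>{pos T J j..<int J * int (L T)}. q k = q' k" for q q'
      proof -
        have "B T J i q = B T J i q'" if "i \<le> j" for i
          using inc[OF that] \<open>\<forall>k\<in>{pos T J j..<int J * int (L T)}. q k = q' k\<close> unfolding B_def Bev_def by auto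
        then show ?thesis by auto
      qed
      show "(\<not> S T J j q) = (\<not> S T J j q')" if "\<forall>k\<in>{0..<pos T J j}. q k = q' k" for q q'
      proof -
        have "Wt e q u (pos T J j) = Wt e q' u (pos T J j)" if "0 \<le> u" for u
          using that \<open>\<forall>k\<in>{0..<pos T J j}. q k = q' k\<close> by (intro Wt_cong) auto
        then show ?thesis unfolding S_def by auto
      qed
    qed
    also have "measure Pn {q \<in> space Pn. \<not> S T J j q} \<le> (1/2) ^ T"
    proof -
      have "{q \<in> space Pn. \<not> S T J j q} \<subseteq> {q\<in>space Pn. \<exists>u<pos T J j. int T < Wt e q u (pos T J j)}"
        unfolding S_def by auto
      then have "measure Pn {q \<in> space Pn. \<not> S T J j q} \<le> measure Pn {q\<in>space Pn. \<exists>u<pos T J j. int T < Wt e q u (pos T J j)}"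
        by (intro finite_measure_mono) measurable
      then show ?thesis using sup_back[OF e0(1,2), of "pos T J j" T] by simp
    qed
    finally show "measure Pn {q \<in> space Pn. (B T J j q \<and> (\<forall>i<j. \<not> B T J i q)) \<and> \<not> S T J j q} \<le>
        measure Pn {q \<in> space Pn. B T J j q \<and> (\<forall>i<j. \<not> B T J i q)} * (1/2) ^ T"
      by (simp add: mult_left_mono)
  qed
  define N0 where "N0 = (\<Inter>T. \<Inter>J. N T J)"
  have N0s: "N0 \<in> sets Pn" unfolding N0_def using Ns by auto
  have "measure Pn N0 \<le> 0"
  proof (rule zero_by_bounds)
    fix T J
    have "measure Pn N0 \<le> measure Pn (N T J)"
      using Ns N0s unfolding N0_def by (intro finite_measure.finite_measure_mono[OF fin_Pn]) auto
    then show "measure Pn N0 \<le> (1 - (1 - c) ^ L T) ^ J + (1/2) ^ T" using bound[of T J] by simp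
  next
    fix T
    have "0 < (1 - c) ^ L T" using e0 by simp
    moreover have "(1 - c) ^ L T \<le> 1" using e0 by (intro power_le_one) auto
    ultimately show "0 \<le> 1 - (1 - c) ^ L T" "1 - (1 - c) ^ L T < 1" by auto
  qed
  then have "N0 \<in> null_sets Pn" by (rule null_from_bounds[OF N0s])
  then show ?thesis
  proof (rule AE_I')
    show "{q \<in> space Pn. \<not> FWg g1 g2 K M q} \<subseteq> N0"
      unfolding N0_def N_def FWg_def using good unfolding e_def c_def by blast
  qed
qed

lemma meas_aseq[measurable]: "(\<lambda>q. aseq g1 g2 i q n) \<in> measurable Pn (count_space UNIV)"
  unfolding aseq_def by (rule measurable_compose[OF meas_shift meas_phi])

lemma pred_eq_count:
  fixes f :: "_ \<Rightarrow> 'b::countable"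
  shows "f \<in> measurable M (count_space UNIV) \<Longrightarrow> Measurable.pred M (\<lambda>x. f x = v)"
  unfolding pred_def by (drule measurable_sets[of _ _ _ "{v}"]) (auto simp: vimage_def Int_def conj_commute)

lemma pred_aseq_eq[measurable]: "Measurable.pred Pn (\<lambda>q. aseq g1 g2 i q n = v)"
  by (rule pred_eq_count[OF meas_aseq])

lemma lim_nat_cases:
  fixes X :: "nat \<Rightarrow> nat"
  shows "lim X = v \<longleftrightarrow> (\<exists>N. \<forall>n\<ge>N. X n = v) \<or> (\<not> (\<exists>w N. \<forall>n\<ge>N. X n = w) \<and> The (\<lambda>_::nat. False) = v)"
proof -
  have tl: "X \<longlonglongrightarrow> L \<longleftrightarrow> (\<exists>N. \<forall>n\<ge>N. X n = L)" for L
    by (simp add: tendsto_discrete eventually_sequentially)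
  show ?thesis
  proof (cases "\<exists>w N. \<forall>n\<ge>N. X n = w")
    case True
    then obtain w where w: "X \<longlonglongrightarrow> w" using tl by blast
    then have "lim X = w" by (rule limI)
    moreover have "(\<exists>N. \<forall>n\<ge>N. X n = v) \<longleftrightarrow> w = v"
      using tl[of v] w LIMSEQ_unique by blast
    ultimately show ?thesis using True by auto
  next
    case False
    then have "(\<lambda>L. X \<longlonglongrightarrow> L) = (\<lambda>_. False)" using tl by (intro ext) blast
    then have "lim X = The (\<lambda>_::nat. False)" unfolding lim_def by simp
    then show ?thesis using False by auto
  qed
qed

lemma meas_alim[measurable]: "(\<lambda>q. alim g1 g2 i q) \<in> measurable Pn (count_space UNIV)"
proof (subst measurable_count_space_eq2_countable, intro conjI ballI)
  fix v :: nat
  have "(\<lambda>q. alim g1 g2 i q) -` {v} \<inter> space Pn = {q\<in>space Pn. (\<exists>N. \<forall>n\<ge>N. aseq g1 g2 i q n = v) \<or>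
      (\<not> (\<exists>w N. \<forall>n\<ge>N. aseq g1 g2 i q n = w) \<and> The (\<lambda>_::nat. False) = v)}"
    unfolding alim_def using lim_nat_cases[of "aseq g1 g2 i _" v] by auto
  also have "\<dots> \<in> sets Pn" by measurable
  finally show "(\<lambda>q. alim g1 g2 i q) -` {v} \<inter> space Pn \<in> sets Pn" .
qed simp

lemma pdist_two: "pdist x {a, b} = min \<bar>real x - real a\<bar> \<bar>real x - real b\<bar>"
  unfolding pdist_def by (simp add: cInf_insert inf_min)

lemma pdist_mem: "finite T \<Longrightarrow> x \<in> T \<Longrightarrow> pdist x T = 0"
  unfolding pdist_def
proof (rule antisym)
  assume "finite T" "x \<in> T"
  show "(INF y\<in>T. \<bar>real x - real y\<bar>) \<le> 0"
    using cINF_lower[of "(\<lambda>y. \<bar>real x - real y\<bar>)" T x] \<open>x \<in> T\<close> by (simp add: bdd_below_def) (meson abs_ge_zero)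
  show "0 \<le> (INF y\<in>T. \<bar>real x - real y\<bar>)"
    using \<open>x \<in> T\<close> by (intro cINF_greatest) auto
qed

lemma hdist_sub: "finite T \<Longrightarrow> S \<subseteq> T \<Longrightarrow> hdist S T = 0"
  unfolding hdist_def using pdist_mem[of T] by (auto simp: subset_eq)

lemma exists_K:
  assumes "g1 > 0" "g2 > 0"
  shows "\<exists>K\<ge>1. pth g1 g2 K \<le> 1/4096"
proof -
  define K where "K = nat \<lceil>4096 * g1 / g2\<rceil> + 1"
  have "4096 * g1 / g2 \<le> real K" unfolding K_def by linarith
  then have "4096 * g1 \<le> g2 * real K" using assms by (simp add: field_simps)
  then have "g1 / (g1 + g2 * real K) \<le> 1/4096" using assms by (simp add: field_simps)
  then show ?thesis unfolding pth_def K_def by (intro exI[of _ "nat \<lceil>4096 * g1 / g2\<rceil> + 1"]) auto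
qed

definition Gd :: "real \<Rightarrow> real \<Rightarrow> nat \<Rightarrow> noise \<Rightarrow> bool" where
  "Gd g1 g2 K q \<longleftrightarrow> (\<forall>k. q k < 1) \<and> (\<forall>t::int. PBg g1 g2 K (shift t q)) \<and> (\<forall>M. FWg g1 g2 K M q)"

lemma AE_Gd:
  assumes g: "g1 > 0" "g2 > 0" "K \<ge> 1" and eK: "pth g1 g2 K \<le> 1/4096"
  shows "AE q in Pn. Gd g1 g2 K q"
proof -
  have e0: "0 \<le> pth g1 g2 K" "pth g1 g2 K \<le> 1/4096" using pth_facts[OF g] eK by auto
  have pb: "AE q in Pn. PBg g1 g2 K q"
    using AE_LAD[OF g eK] AE_BW[OF e0]
    by eventually_elim (auto simp: PBg_def)
  have "AE q in Pn. \<forall>t::int. PBg g1 g2 K (shift t q)"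
  proof (subst AE_all_countable, intro allI)
    fix t :: int
    show "AE q in Pn. PBg g1 g2 K (shift t q)" using AE_shift[OF pb] .
  qed
  moreover have "AE q in Pn. \<forall>M. FWg g1 g2 K M q"
    by (subst AE_all_countable) (auto intro: AE_FW[OF g eK])
  ultimately show ?thesis using AE_lt1 by eventually_elim (simp add: Gd_def)
qed

definition stab :: "real \<Rightarrow> real \<Rightarrow> noise \<Rightarrow> nat \<Rightarrow> nat \<Rightarrow> bool" where
  "stab g1 g2 q a0 a1 \<longleftrightarrow> (\<forall>y. \<exists>S. \<forall>s\<ge>S. phi g1 g2 s (shift (- int s) q) y = (if even (y + s) then a0 else a1))"

lemma stab_alim:
  assumes "stab g1 g2 q a0 a1"
  shows "aseq g1 g2 0 q \<longlonglongrightarrow> a0" "aseq g1 g2 1 q \<longlonglongrightarrow> a1"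
    "alim g1 g2 0 q = a0" "alim g1 g2 1 q = a1"
proof -
  have t: "aseq g1 g2 i q \<longlonglongrightarrow> (if even i then a0 else a1)" for i
  proof -
    obtain S where S: "\<And>s. s \<ge> S \<Longrightarrow> phi g1 g2 s (shift (- int s) q) i = (if even (i + s) then a0 else a1)"
      using assms unfolding stab_def by blast
    have "eventually (\<lambda>n. aseq g1 g2 i q n = (if even i then a0 else a1)) sequentially"
      unfolding eventually_sequentially
    proof (intro exI allI impI)
      fix n assume "S \<le> n"
      then have "S \<le> 2 * n" by simp
      from S[OF this] show "aseq g1 g2 i q n = (if even i then a0 else a1)"
        unfolding aseq_def by simp
    qed
    then show ?thesis by (rule tendsto_eventually)
  qed
  show "aseq g1 g2 0 q \<longlonglongrightarrow> a0" using t[of 0] by simp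
  show "aseq g1 g2 1 q \<longlonglongrightarrow> a1" using t[of 1] by simp
  then show "alim g1 g2 1 q = a1" unfolding alim_def by (rule limI)
  show "alim g1 g2 0 q = a0" using t[of 0] unfolding alim_def by (simp add: limI)
qed

lemma Gd_stab:
  assumes g: "g1 > 0" "g2 > 0" "K \<ge> 1" and G: "Gd g1 g2 K q"
  shows "stab g1 g2 (shift t q) (alim g1 g2 0 (shift t q)) (alim g1 g2 1 (shift t q))"
proof -
  have q1: "\<forall>k. shift t q k < 1" using G unfolding Gd_def by (simp add: shift_apply)
  have "PBg g1 g2 K (shift t q)" using G unfolding Gd_def by blast
  from PB_stab[OF g q1 this] obtain a0 a1 where "stab g1 g2 (shift t q) a0 a1"
    unfolding stab_def by blast
  then show ?thesis using stab_alim by metis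
qed

lemma stab_shift:
  assumes sq: "stab g1 g2 q a0 a1" and ss: "stab g1 g2 (shift (int n) q) b0 b1"
  shows "(if even (i + n) then b0 else b1) = phi g1 g2 n q (if even i then a0 else a1)"
proof -
  obtain S1 where S1: "\<And>s. s \<ge> S1 \<Longrightarrow> phi g1 g2 s (shift (- int s) q) i = (if even (i + s) then a0 else a1)"
    using sq unfolding stab_def by blast
  obtain S2 where S2: "\<And>s. s \<ge> S2 \<Longrightarrow> phi g1 g2 s (shift (- int s) (shift (int n) q)) i = (if even (i + s) then b0 else b1)"
    using ss unfolding stab_def by blast
  define m where "m = S1 + S2"
  have "phi g1 g2 (2 * m + n) (shift (- int (2 * m + n)) (shift (int n) q)) i = (if even (i + (2 * m + n)) then b0 else b1)"
    using S2[of "2 * m + n"] unfolding m_def by simp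
  moreover have "shift (- int (2 * m + n)) (shift (int n) q) = shift (- int (2 * m)) q"
    by (simp add: shift_shift)
  moreover have "phi g1 g2 (2 * m + n) (shift (- int (2 * m)) q) i =
      phi g1 g2 n q (phi g1 g2 (2 * m) (shift (- int (2 * m)) q) i)"
    by (simp add: phi_add shift_shift)
  moreover have "phi g1 g2 (2 * m) (shift (- int (2 * m)) q) i = (if even i then a0 else a1)"
    using S1[of "2 * m"] unfolding m_def by simp
  ultimately show ?thesis by simp
qed

lemma meas3:
  fixes h :: "nat \<Rightarrow> nat \<Rightarrow> nat \<Rightarrow> real"
  assumes f1: "f1 \<in> measurable M (count_space UNIV)" and f2: "f2 \<in> measurable M (count_space UNIV)"
    and f3: "f3 \<in> measurable M (count_space UNIV)"
  shows "(\<lambda>x. h (f1 x) (f2 x) (f3 x)) \<in> borel_measurable M"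
proof -
  have l3: "(\<lambda>x. h a b (f3 x)) \<in> borel_measurable M" for a b
    using measurable_compose[OF f3, of "h a b" borel] by simp
  have l2: "(\<lambda>x. h a (f2 x) (f3 x)) \<in> borel_measurable M" for a
    by (rule measurable_compose_countable[where f="\<lambda>b x. h a b (f3 x)" and g=f2, OF l3 f2])
  show ?thesis
    by (rule measurable_compose_countable[where f="\<lambda>a x. h a (f2 x) (f3 x)" and g=f1, OF l2 f1])
qed

lemma meas_alim_shift: "(\<lambda>q. alim g1 g2 i (shift t q)) \<in> measurable Pn (count_space UNIV)"
  by (rule measurable_compose[OF meas_shift meas_alim])

lemma meas_pdistA: "(\<lambda>q. pdist (f q) {alim g1 g2 0 (shift t q), alim g1 g2 1 (shift t q)}) \<in> borel_measurable Pn"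
  if "f \<in> measurable Pn (count_space UNIV)"
  unfolding pdist_two
  by (rule meas3[where h="\<lambda>x a b. min \<bar>real x - real a\<bar> \<bar>real x - real b\<bar>", OF that meas_alim_shift meas_alim_shift])

lemma meas_hdist:
  assumes "finite B" and f: "\<And>x. (\<lambda>q. f q x) \<in> measurable Pn (count_space UNIV)"
  shows "(\<lambda>q. hdist (f q ` B) {alim g1 g2 0 (shift t q), alim g1 g2 1 (shift t q)}) \<in> borel_measurable Pn"
proof (cases "B = {}")
  case True
  then show ?thesis by (simp add: hdist_def)
next
  case False
  have eq: "hdist (f q ` B) T = (SUP x\<in>B. pdist (f q x) T)" for q T
    using False unfolding hdist_def by (simp add: image_image)
  have "(\<lambda>q. SUP x\<in>B. pdist (f q x) {alim g1 g2 0 (shift t q), alim g1 g2 1 (shift t q)}) \<in> borel_measurable Pn"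
  proof (rule borel_measurable_cSUP)
    show "countable B" using assms(1) by (rule countable_finite)
    show "(\<lambda>q. pdist (f q x) {alim g1 g2 0 (shift t q), alim g1 g2 1 (shift t q)}) \<in> borel_measurable Pn" for x
      by (rule meas_pdistA[OF f])
    show "bdd_above ((\<lambda>x. pdist (f q x) {alim g1 g2 0 (shift t q), alim g1 g2 1 (shift t q)}) ` B)" for q
      using assms(1) by simp
  qed
  then show ?thesis unfolding eq .
qed

lemma conv_prob:
  fixes D :: "nat \<Rightarrow> noise \<Rightarrow> real"
  assumes meas: "\<And>n. D n \<in> borel_measurable Pn"
    and ae: "AE q in Pn. eventually (\<lambda>n. D n q = 0) sequentially" and e: "e > 0"
  shows "(\<lambda>n. measure Pn {q\<in>space Pn. D n q > e}) \<longlonglongrightarrow> 0"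
proof -
  interpret prob_space Pn by (rule prob_Pn)
  define G where "G = (\<lambda>n. {q\<in>space Pn. \<exists>m\<ge>n. D m q \<noteq> 0})"
  have A: "{q\<in>space Pn. D m q \<noteq> 0} \<in> sets Pn" for m
  proof -
    have "D m -` (- {0}) \<inter> space Pn \<in> sets Pn" by (rule measurable_sets[OF meas]) simp
    moreover have "{q\<in>space Pn. D m q \<noteq> 0} = D m -` (- {0}) \<inter> space Pn" by auto
    ultimately show ?thesis by simp
  qed
  have Gs: "G n \<in> sets Pn" for n
  proof -
    have "G n = (\<Union>m\<in>{n..}. {q\<in>space Pn. D m q \<noteq> 0})" unfolding G_def by auto
    also have "\<dots> \<in> sets Pn" using A by (intro sets.countable_UN') auto
    finally show ?thesis .
  qed
  have dec: "decseq G" unfolding decseq_def G_def by (auto; meson le_trans)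
  have "AE q in Pn. q \<notin> (\<Inter>n. G n)"
    using ae
  proof eventually_elim
    case (elim q)
    then obtain N where "\<forall>m\<ge>N. D m q = 0" unfolding eventually_sequentially by blast
    then have "q \<notin> G N" unfolding G_def by blast
    then show ?case by blast
  qed
  moreover have Is: "(\<Inter>n. G n) \<in> sets Pn" using Gs by blast
  moreover have "{q\<in>space Pn. \<not> q \<notin> (\<Inter>n. G n)} = (\<Inter>n. G n)"
    using sets.sets_into_space[OF Is] by blast
  ultimately have "emeasure Pn (\<Inter>n. G n) = 0"
    using AE_iff_measurable[of "\<Inter>n. G n" Pn "\<lambda>q. q \<notin> (\<Inter>n. G n)"] by blast
  then have m0: "measure Pn (\<Inter>n. G n) = 0" by (simp add: measure_def)
  have lim: "(\<lambda>n. measure Pn (G n)) \<longlonglongrightarrow> 0"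
    using finite_Lim_measure_decseq[of G] Gs dec m0 by auto
  show ?thesis
  proof (rule tendsto_sandwich[OF _ _ tendsto_const lim])
    show "\<forall>\<^sub>F n in sequentially. 0 \<le> measure Pn {q\<in>space Pn. D n q > e}" by simp
    show "\<forall>\<^sub>F n in sequentially. measure Pn {q\<in>space Pn. D n q > e} \<le> measure Pn (G n)"
    proof (intro always_eventually allI)
      fix n
      have "{q\<in>space Pn. D n q > e} \<subseteq> G n" unfolding G_def using e by (auto intro!: exI[of _ n])
      then show "measure Pn {q\<in>space Pn. D n q > e} \<le> measure Pn (G n)"
        using Gs by (intro finite_measure_mono) auto
    qed
  qed
qed

context
  fixes g1 g2 :: real and K :: nat and q :: noise
  assumes g: "g1 > 0" "g2 > 0" "K \<ge> 1" and G: "Gd g1 g2 K q"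
begin

lemma q1: "\<forall>k. shift t q k < 1"
  using G unfolding Gd_def by (simp add: shift_apply)

lemma stab0: "stab g1 g2 q (alim g1 g2 0 q) (alim g1 g2 1 q)"
  using Gd_stab[OF g G, of 0] by simp

lemma stabn: "stab g1 g2 (shift (int n) q) (alim g1 g2 0 (shift (int n) q)) (alim g1 g2 1 (shift (int n) q))"
  using Gd_stab[OF g G] .

lemma G_conv: "convergent (aseq g1 g2 i q)" if "i \<in> {0, 1}"
  using stab_alim[OF stab0] that unfolding convergent_def by auto

lemma G_step:
  "alim g1 g2 (if even n then 0 else 1) (shift (int n) q) = phi g1 g2 n q (alim g1 g2 0 q)"
  "alim g1 g2 (if even n then 1 else 0) (shift (int n) q) = phi g1 g2 n q (alim g1 g2 1 q)"
  using stab_shift[OF stab0 stabn, of 0 n] stab_shift[OF stab0 stabn, of 1 n] by auto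

lemma G_inv: "phi g1 g2 n q ` {alim g1 g2 0 q, alim g1 g2 1 q} = {alim g1 g2 0 (shift (int n) q), alim g1 g2 1 (shift (int n) q)}"
  using G_step[of n] by (cases "even n") auto

lemma G_per: "phi g1 g2 1 q (alim g1 g2 0 q) = alim g1 g2 1 (shift 1 q) \<and>
              phi g1 g2 1 q (alim g1 g2 1 q) = alim g1 g2 0 (shift 1 q)"
  using G_step[of 1] by simp

lemma G_par: "even (alim g1 g2 0 q)" "odd (alim g1 g2 1 q)"
    and G_dist: "\<bar>int (alim g1 g2 0 q) - int (alim g1 g2 1 q)\<bar> = 1"
proof -
  have "\<exists>S. \<forall>s\<ge>S. phi g1 g2 s (shift (- int s) q) 0 = (if even (0 + s) then alim g1 g2 0 q else alim g1 g2 1 q)"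
    using stab0 unfolding stab_def by blast
  then obtain S0 where S0: "\<And>s. s \<ge> S0 \<Longrightarrow> phi g1 g2 s (shift (- int s) q) 0 = (if even (0 + s) then alim g1 g2 0 q else alim g1 g2 1 q)"
    by blast
  have "\<exists>S. \<forall>s\<ge>S. phi g1 g2 s (shift (- int s) q) 1 = (if even (1 + s) then alim g1 g2 0 q else alim g1 g2 1 q)"
    using stab0 unfolding stab_def by blast
  then obtain S1 where S1: "\<And>s. s \<ge> S1 \<Longrightarrow> phi g1 g2 s (shift (- int s) q) 1 = (if even (1 + s) then alim g1 g2 0 q else alim g1 g2 1 q)"
    by blast
  define s where "s = 2 * (S0 + S1)"
  have a0: "phi g1 g2 s (shift (- int s) q) 0 = alim g1 g2 0 q" using S0[of s] unfolding s_def by simp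
  have a1: "phi g1 g2 s (shift (- int s) q) 1 = alim g1 g2 1 q" using S1[of s] unfolding s_def by simp
  show "even (alim g1 g2 0 q)" using phi_par[OF g(1) q1[of "- int s"], where n=s and x=0 and ?g2.0=g2] a0 unfolding s_def by simp
  show "odd (alim g1 g2 1 q)" using phi_par[OF g(1) q1[of "- int s"], where n=s and x=1 and ?g2.0=g2] a1 unfolding s_def by simp
  show "\<bar>int (alim g1 g2 0 q) - int (alim g1 g2 1 q)\<bar> = 1"
    using phi_dist1[OF g(1,2) q1[of "- int s"], where n=s and x=0] a0 a1 by simp
qed

lemma G_pull:
  assumes "finite B"
  shows "eventually (\<lambda>n. phi g1 g2 n (shift (- int n) q) ` B \<subseteq> {alim g1 g2 0 q, alim g1 g2 1 q}) sequentially"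
proof -
  have "\<forall>y\<in>B. eventually (\<lambda>n. phi g1 g2 n (shift (- int n) q) y \<in> {alim g1 g2 0 q, alim g1 g2 1 q}) sequentially"
  proof
    fix y
    obtain S where S: "\<And>s. s \<ge> S \<Longrightarrow> phi g1 g2 s (shift (- int s) q) y = (if even (y + s) then alim g1 g2 0 q else alim g1 g2 1 q)"
      using stab0 unfolding stab_def by blast
    show "eventually (\<lambda>n. phi g1 g2 n (shift (- int n) q) y \<in> {alim g1 g2 0 q, alim g1 g2 1 q}) sequentially"
      unfolding eventually_sequentially
    proof (intro exI[of _ S] allI impI)
      fix n assume "S \<le> n"
      then have "phi g1 g2 n (shift (- int n) q) y = (if even (y + n) then alim g1 g2 0 q else alim g1 g2 1 q)"
        by (rule S)
      then show "phi g1 g2 n (shift (- int n) q) y \<in> {alim g1 g2 0 q, alim g1 g2 1 q}" by simp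
    qed
  qed
  then have "eventually (\<lambda>n. \<forall>y\<in>B. phi g1 g2 n (shift (- int n) q) y \<in> {alim g1 g2 0 q, alim g1 g2 1 q}) sequentially"
    by (rule eventually_ball_finite[OF assms])
  then show ?thesis by (rule eventually_mono) blast
qed

lemma G_fwd:
  assumes "finite B"
  shows "eventually (\<lambda>n. phi g1 g2 n q ` B \<subseteq> {alim g1 g2 0 (shift (int n) q), alim g1 g2 1 (shift (int n) q)}) sequentially"
proof -
  let ?a0 = "alim g1 g2 0 q" and ?a1 = "alim g1 g2 1 q"
  define M where "M = Max (insert ?a0 (insert ?a1 B))"
  have fin: "finite (insert ?a0 (insert ?a1 B))" using assms by simp
  have le: "x \<le> M" if "x \<in> insert ?a0 (insert ?a1 B)" for x
    unfolding M_def using fin that by (rule Max_ge)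
  have fw: "FWg g1 g2 K M q" using G unfolding Gd_def by blast
  have q1': "\<forall>k. q k < 1" using G unfolding Gd_def by blast
  obtain N where N: "\<And>x x' n. x \<le> K + M \<Longrightarrow> x' \<le> K + M \<Longrightarrow> even x = even x' \<Longrightarrow> N \<le> n \<Longrightarrow>
      phi g1 g2 n q x = phi g1 g2 n q x'"
    using FW_coal[OF g q1' fw] by blast
  show ?thesis
    unfolding eventually_sequentially
  proof (intro exI[of _ N] allI impI subsetI)
    fix n z assume n: "N \<le> n" and z: "z \<in> phi g1 g2 n q ` B"
    then obtain x where x: "x \<in> B" "z = phi g1 g2 n q x" by blast
    define x' where "x' = (if even x then ?a0 else ?a1)"
    have "x \<le> K + M" using le[of x] x by simp
    moreover have "x' \<le> K + M" using le[of ?a0] le[of ?a1] unfolding x'_def by simp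
    moreover have "even x = even x'" unfolding x'_def using G_par by auto
    ultimately have "z = phi g1 g2 n q x'" using N n x by blast
    moreover have "x' \<in> {?a0, ?a1}" unfolding x'_def by simp
    ultimately show "z \<in> {alim g1 g2 0 (shift (int n) q), alim g1 g2 1 (shift (int n) q)}"
      using G_inv[of n] by blast
  qed
qed

end

theorem theorem4p10:
  fixes g1 g2 :: real
  assumes "g1 > 0" and "g2 > 0"
  defines "A \<equiv> (\<lambda>q. {alim g1 g2 0 q, alim g1 g2 1 q})"
  shows "(\<forall>i\<in>{0,1}. AE q in Pn. convergent (aseq g1 g2 i q))
       \<and> weak_attractor g1 g2 A
       \<and> (AE q in Pn. phi g1 g2 1 q (alim g1 g2 0 q) = alim g1 g2 1 (shift 1 q)
                    \<and> phi g1 g2 1 q (alim g1 g2 1 q) = alim g1 g2 0 (shift 1 q))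
       \<and> pullback_attractor g1 g2 A
       \<and> forward_attractor g1 g2 A
       \<and> (AE q in Pn. \<bar>int (alim g1 g2 0 q) - int (alim g1 g2 1 q)\<bar> = 1)"
proof -
  obtain K where K: "K \<ge> 1" "pth g1 g2 K \<le> 1/4096" using exists_K[OF assms(1,2)] by blast
  note g = assms(1) assms(2) K(1)
  have AEG: "AE q in Pn. Gd g1 g2 K q" by (rule AE_Gd[OF g K(2)])
  have rfs: "random_finite_set A"
    unfolding random_finite_set_def
  proof (intro conjI allI ballI)
    fix x :: nat
    have "(\<lambda>q. pdist x {alim g1 g2 0 (shift 0 q), alim g1 g2 1 (shift 0 q)}) \<in> borel_measurable Pn"
      by (rule meas_pdistA) simp
    then show "(\<lambda>q. pdist x (A q)) \<in> borel_measurable Pn" unfolding A_def by simp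
  qed (auto simp: A_def)
  have inv: "invariant g1 g2 A"
    unfolding invariant_def A_def using AEG
    by eventually_elim (use G_inv[OF g] in auto)
  have fwd: "AE q in Pn. eventually (\<lambda>n. hdist (phi g1 g2 n q ` B) (A (shift (int n) q)) = 0) sequentially"
    if "finite B" for B
    using AEG
  proof eventually_elim
    case (elim q)
    show ?case using G_fwd[OF g elim that] unfolding A_def
      by (rule eventually_mono) (rule hdist_sub, simp_all)
  qed
  have pull: "AE q in Pn. eventually (\<lambda>n. hdist (phi g1 g2 n (shift (- int n) q) ` B) (A q) = 0) sequentially"
    if "finite B" for B
    using AEG
  proof eventually_elim
    case (elim q)
    show ?case using G_pull[OF g elim that] unfolding A_def
      by (rule eventually_mono) (rule hdist_sub, simp_all)
  qed
  have hmeas: "(\<lambda>q. hdist (phi g1 g2 n q ` B) (A (shift (int n) q))) \<in> borel_measurable Pn"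
    if "finite B" for B n
    unfolding A_def by (rule meas_hdist[OF that meas_phi])
  have weak: "weak_attractor g1 g2 A"
    unfolding weak_attractor_def
  proof (intro conjI rfs inv allI impI)
    fix B :: "nat set" and n assume "finite B"
    then show "(\<lambda>q. hdist (phi g1 g2 n q ` B) (A (shift (int n) q))) \<in> borel_measurable Pn"
      by (rule hmeas)
  next
    fix B :: "nat set" and e :: real assume B: "finite B" and e: "e > 0"
    show "(\<lambda>n. measure Pn {q \<in> space Pn. e < hdist (phi g1 g2 n q ` B) (A (shift (int n) q))}) \<longlonglongrightarrow> 0"
      by (rule conv_prob[OF hmeas[OF B] fwd[OF B] e])
  qed
  have pb: "pullback_attractor g1 g2 A"
    unfolding pullback_attractor_def
  proof (intro conjI rfs inv allI impI)
    fix B :: "nat set" assume "finite B"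
    from pull[OF this]
    show "AE q in Pn. (\<lambda>n. hdist (phi g1 g2 n (shift (- int n) q) ` B) (A q)) \<longlonglongrightarrow> 0"
      by eventually_elim (rule tendsto_eventually)
  qed
  have fw: "forward_attractor g1 g2 A"
    unfolding forward_attractor_def
  proof (intro conjI rfs inv allI impI)
    fix B :: "nat set" assume "finite B"
    from fwd[OF this]
    show "AE q in Pn. (\<lambda>n. hdist (phi g1 g2 n q ` B) (A (shift (int n) q))) \<longlonglongrightarrow> 0"
      by eventually_elim (rule tendsto_eventually)
  qed
  have conv: "\<forall>i\<in>{0,1}. AE q in Pn. convergent (aseq g1 g2 i q)"
  proof
    fix i :: nat assume "i \<in> {0, 1}"
    show "AE q in Pn. convergent (aseq g1 g2 i q)"
      using AEG by eventually_elim (rule G_conv[OF g _ \<open>i \<in> {0,1}\<close>])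
  qed
  have per: "AE q in Pn. phi g1 g2 1 q (alim g1 g2 0 q) = alim g1 g2 1 (shift 1 q)
                    \<and> phi g1 g2 1 q (alim g1 g2 1 q) = alim g1 g2 0 (shift 1 q)"
    using AEG by eventually_elim (rule G_per[OF g])
  have dist: "AE q in Pn. \<bar>int (alim g1 g2 0 q) - int (alim g1 g2 1 q)\<bar> = 1"
    using AEG by eventually_elim (rule G_dist[OF g])
  show ?thesis using conv weak per pb fw dist by blast
qed

end
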